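(* With the notation below, for $1\le i\le r$ let $W_{p_i} = \eta_M(W) \cap \mathrm{GL}(e_i,p_i)$. Then: (a) $\eta_M(W) = W_{p_1}\times\cdots\times W_{p_r}$; (b) $W_{p_i} = \mathrm{Stab}_{C_{p_i}}([\epsilon_{p_i}])$ for $1 \le i \le r$.
   Context: Let $G$ be a finite group of $F$-class $\ge 1$ whose $F$-rank (the order $|\nu_0(G)/\nu_1(G)|$, where $\nu_0(G)=F(G)$ is the Fitting subgroup and $\nu_1(G)=\Phi(F(G))$) has prime divisors $p_1,\dots,p_r$, and $k=p_1\cdots p_r$. With $F$ free on $f_1,\dots,f_n$, $\mu:F\to G$ an epimorphism, $R=\ker\mu$, $L=\mu^{-1}(F(G))$, put $G^*=F/[R,L]R^k$ and $M=R/[R,L]R^k$, an abelian normal subgroup of $G^*$ with $G^*/M=G$. Then $M=M_{p_1}\times\cdots\times M_{p_r}$ with $M_{p_i}$ its Sylow $p_i$-subgroup, elementary abelian of rank $e_i$, so $\mathrm{Aut}(M)=\mathrm{GL}(e_1,p_1)\times\cdots\times\mathrm{GL}(e_r,p_r)$. $\mathrm{Aut}_M(G^* )$ is the group of automorphisms of $G^*$ leaving $M$ invariant; $\eta_G$ maps $\alpha$ to the induced automorphism of $G^*/M=G$, $\eta_M$ maps $\alpha$ to $\alpha|_M$, and $W=\ker\eta_G$. $G$ acts on $M$ via conjugation in $G^*$; $C_{p_i}$ is the centralizer in $\mathrm{Aut}(M_{p_i})=\mathrm{GL}(e_i,p_i)$ of the induced action of $G$ on $M_{p_i}$. Let $\epsilon\in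 Z^2(G,M)$ define $G^*$ as extension of $M$ by $G$ and write $\epsilon=\epsilon_{p_1}+\cdots+\epsilon_{p_r}$ with $\epsilon_{p_i}\in Z^2(G,M_{p_i})$ (using $Z^2(G,M)=\bigoplus_i Z^2(G,M_{p_i})$), and $[\epsilon_{p_i}]=\epsilon_{p_i}+B^2(G,M_{p_i})$. $C_{p_i}$ acts on $H^2(G,M_{p_i})$ via $c([\delta])=[c\circ\delta]$. *)

theory Defs
  imports "HOL-Algebra.Generated_Groups" "HOL-Algebra.FiniteProduct"
          "HOL-Computational_Algebra.Primes"
begin

text \<open>A word is a list of letters (i, b): generator i, with exponent +1 if b, -1 otherwise.\<close>

definition word_eval :: "('a, 'm) monoid_scheme \<Rightarrow> (nat \<Rightarrow> 'a) \<Rightarrow> (nat \<times> bool) list \<Rightarrow> 'a" where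
  "word_eval F g ws =
     foldr (\<lambda>(i, b) acc. (if b then g i else inv\<^bsub>F\<^esub> (g i)) \<otimes>\<^bsub>F\<^esub> acc) ws \<one>\<^bsub>F\<^esub>"

definition reduced_word :: "(nat \<times> bool) list \<Rightarrow> bool" where
  "reduced_word ws = (\<forall>j. Suc j < length ws \<longrightarrow>
      \<not> (fst (ws ! j) = fst (ws ! Suc j) \<and> snd (ws ! j) \<noteq> snd (ws ! Suc j)))"

definition free_on :: "('a, 'm) monoid_scheme \<Rightarrow> (nat \<Rightarrow> 'a) \<Rightarrow> nat \<Rightarrow> bool" where
  "free_on F g n = (group F \<and> g ` {..<n} \<subseteq> carrier F \<and> inj_on g {..<n}
      \<and> generate F (g ` {..<n}) = carrier F
      \<and> (\<forall>ws. ws \<noteq> [] \<and> fst ` set ws \<subseteq> {..<n} \<and> reduced_word ws \<longrightarrow> word_eval F g ws \<noteq> \<one>\<^bsub>F\<^esub>))"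

definition comm_sub :: "('a, 'm) monoid_scheme \<Rightarrow> 'a set \<Rightarrow> 'a set \<Rightarrow> 'a set" where
  "comm_sub G H K = generate G
     {inv\<^bsub>G\<^esub> h \<otimes>\<^bsub>G\<^esub> inv\<^bsub>G\<^esub> k \<otimes>\<^bsub>G\<^esub> h \<otimes>\<^bsub>G\<^esub> k | h k. h \<in> H \<and> k \<in> K}"

fun lower_central :: "('a, 'm) monoid_scheme \<Rightarrow> nat \<Rightarrow> 'a set" where
  "lower_central G 0 = carrier G"
| "lower_central G (Suc i) = comm_sub G (lower_central G i) (carrier G)"

definition nilpotent_group :: "('a, 'm) monoid_scheme \<Rightarrow> bool" where
  "nilpotent_group G = (group G \<and> (\<exists>i. lower_central G i = {\<one>\<^bsub>G\<^esub>}))"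

definition fitting :: "('a, 'm) monoid_scheme \<Rightarrow> 'a set" where
  "fitting G = generate G (\<Union>{N. N \<lhd> G \<and> nilpotent_group (G\<lparr>carrier := N\<rparr>)})"

definition maximal_subgroup :: "'a set \<Rightarrow> ('a, 'm) monoid_scheme \<Rightarrow> bool" where
  "maximal_subgroup K G = (subgroup K G \<and> K \<noteq> carrier G \<and>
      (\<forall>J. subgroup J G \<and> K \<subseteq> J \<longrightarrow> J = K \<or> J = carrier G))"

definition frattini :: "('a, 'm) monoid_scheme \<Rightarrow> 'a set" where
  "frattini G = \<Inter>(insert (carrier G) {K. maximal_subgroup K G})"

text \<open>F-rank |nu_0(G)/nu_1(G)| = |F(G) / Phi(F(G))|, its prime divisors, and k.\<close>
definition F_rank :: "('a, 'm) monoid_scheme \<Rightarrow> nat" where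
  "F_rank G = card (fitting G) div card (frattini (G\<lparr>carrier := fitting G\<rparr>))"

definition F_primes :: "('a, 'm) monoid_scheme \<Rightarrow> nat set" where
  "F_primes G = {p. prime p \<and> p dvd F_rank G}"

definition k_of :: "('a, 'm) monoid_scheme \<Rightarrow> nat" where
  "k_of G = \<Prod>(F_primes G)"

section \<open>The construction G* = F/[R,L]R^k, M = R/[R,L]R^k\<close>

definition Rsub :: "('f, 'm) monoid_scheme \<Rightarrow> ('g, 'n) monoid_scheme \<Rightarrow> ('f \<Rightarrow> 'g) \<Rightarrow> 'f set" where
  "Rsub F G mu = kernel F G mu"

definition Lsub :: "('f, 'm) monoid_scheme \<Rightarrow> ('g, 'n) monoid_scheme \<Rightarrow> ('f \<Rightarrow> 'g) \<Rightarrow> 'f set" where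
  "Lsub F G mu = {x \<in> carrier F. mu x \<in> fitting G}"

definition Nsub :: "('f, 'm) monoid_scheme \<Rightarrow> ('g, 'n) monoid_scheme \<Rightarrow> ('f \<Rightarrow> 'g) \<Rightarrow> 'f set" where
  "Nsub F G mu = comm_sub F (Rsub F G mu) (Lsub F G mu) <#>\<^bsub>F\<^esub>
                 generate F {x [^]\<^bsub>F\<^esub> k_of G | x. x \<in> Rsub F G mu}"

definition Gstar :: "('f, 'm) monoid_scheme \<Rightarrow> ('g, 'n) monoid_scheme \<Rightarrow> ('f \<Rightarrow> 'g) \<Rightarrow> 'f set monoid" where
  "Gstar F G mu = F Mod (Nsub F G mu)"

definition Mset :: "('f, 'm) monoid_scheme \<Rightarrow> ('g, 'n) monoid_scheme \<Rightarrow> ('f \<Rightarrow> 'g) \<Rightarrow> 'f set set" where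
  "Mset F G mu = (\<lambda>x. Nsub F G mu #>\<^bsub>F\<^esub> x) ` Rsub F G mu"

definition Mgrp :: "('f, 'm) monoid_scheme \<Rightarrow> ('g, 'n) monoid_scheme \<Rightarrow> ('f \<Rightarrow> 'g) \<Rightarrow> 'f set monoid" where
  "Mgrp F G mu = (Gstar F G mu)\<lparr>carrier := Mset F G mu\<rparr>"

text \<open>M_p: the Sylow p-subgroup of the finite abelian group M, i.e. its p-elements.\<close>
definition Msyl :: "('f, 'm) monoid_scheme \<Rightarrow> ('g, 'n) monoid_scheme \<Rightarrow> ('f \<Rightarrow> 'g) \<Rightarrow> nat \<Rightarrow> 'f set set" where
  "Msyl F G mu p = {m \<in> Mset F G mu. \<exists>e::nat. m [^]\<^bsub>Gstar F G mu\<^esub> (p ^ e) = \<one>\<^bsub>Gstar F G mu\<^esub>}"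

text \<open>Action of G on M by conjugation in G*: g acts via any preimage of g in G*.\<close>
definition gact :: "('f, 'm) monoid_scheme \<Rightarrow> ('g, 'n) monoid_scheme \<Rightarrow> ('f \<Rightarrow> 'g) \<Rightarrow> 'g \<Rightarrow> 'f set \<Rightarrow> 'f set" where
  "gact F G mu g m =
     (let x = Nsub F G mu #>\<^bsub>F\<^esub> (SOME w. w \<in> carrier F \<and> mu w = g)
      in x \<otimes>\<^bsub>Gstar F G mu\<^esub> m \<otimes>\<^bsub>Gstar F G mu\<^esub> inv\<^bsub>Gstar F G mu\<^esub> x)"

text \<open>eps is a 2-cocycle defining G* as an extension of M by G (w.r.t. G*/M = G via mu):
  eps(g,h) = s(g) s(h) s(gh)^{-1} for a section s of G* -> G.\<close>
definition defines_extension :: "('f, 'm) monoid_scheme \<Rightarrow> ('g, 'n) monoid_scheme \<Rightarrow> ('f \<Rightarrow> 'g)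
    \<Rightarrow> ('g \<Rightarrow> 'g \<Rightarrow> 'f set) \<Rightarrow> bool" where
  "defines_extension F G mu eps = (\<exists>s.
      (\<forall>g \<in> carrier G. \<exists>w \<in> carrier F. mu w = g \<and> s g = Nsub F G mu #>\<^bsub>F\<^esub> w) \<and>
      (\<forall>g \<in> carrier G. \<forall>h \<in> carrier G.
          eps g h = s g \<otimes>\<^bsub>Gstar F G mu\<^esub> s h \<otimes>\<^bsub>Gstar F G mu\<^esub> inv\<^bsub>Gstar F G mu\<^esub> (s (g \<otimes>\<^bsub>G\<^esub> h))))"

text \<open>[d] = [d'] in H^2(G, M_p): d and d' differ by a coboundary (written multiplicatively).\<close>
definition cohomologous :: "('f, 'm) monoid_scheme \<Rightarrow> ('g, 'n) monoid_scheme \<Rightarrow> ('f \<Rightarrow> 'g) \<Rightarrow> nat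
    \<Rightarrow> ('g \<Rightarrow> 'g \<Rightarrow> 'f set) \<Rightarrow> ('g \<Rightarrow> 'g \<Rightarrow> 'f set) \<Rightarrow> bool" where
  "cohomologous F G mu p d d' = (\<exists>phi.
      (\<forall>g \<in> carrier G. phi g \<in> Msyl F G mu p) \<and>
      (\<forall>g \<in> carrier G. \<forall>h \<in> carrier G.
          d g h = d' g h \<otimes>\<^bsub>Gstar F G mu\<^esub> gact F G mu g (phi h)
                  \<otimes>\<^bsub>Gstar F G mu\<^esub> inv\<^bsub>Gstar F G mu\<^esub> (phi (g \<otimes>\<^bsub>G\<^esub> h))
                  \<otimes>\<^bsub>Gstar F G mu\<^esub> phi g))"

definition Aut :: "('a, 'm) monoid_scheme \<Rightarrow> ('a \<Rightarrow> 'a) set" where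
  "Aut A = iso A A \<inter> extensional (carrier A)"

text \<open>C_p: centraliser in Aut(M_p) = GL(e,p) of the action of G on M_p.\<close>
definition Cp :: "('f, 'm) monoid_scheme \<Rightarrow> ('g, 'n) monoid_scheme \<Rightarrow> ('f \<Rightarrow> 'g) \<Rightarrow> nat \<Rightarrow> ('f set \<Rightarrow> 'f set) set" where
  "Cp F G mu p = {c \<in> Aut ((Gstar F G mu)\<lparr>carrier := Msyl F G mu p\<rparr>).
      \<forall>g \<in> carrier G. \<forall>m \<in> Msyl F G mu p. c (gact F G mu g m) = gact F G mu g (c m)}"

text \<open>Aut_M(G*), W = ker eta_G, eta_M(W), and W_p = eta_M(W) \<inter> GL(e,p), where GL(e,p) sits
  inside Aut(M) = prod GL(e_i,p_i) as the automorphisms fixing every other M_q pointwise.\<close>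
definition AutM_Gstar :: "('f, 'm) monoid_scheme \<Rightarrow> ('g, 'n) monoid_scheme \<Rightarrow> ('f \<Rightarrow> 'g) \<Rightarrow> ('f set \<Rightarrow> 'f set) set" where
  "AutM_Gstar F G mu = {a \<in> iso (Gstar F G mu) (Gstar F G mu). a ` Mset F G mu = Mset F G mu}"

definition Wker :: "('f, 'm) monoid_scheme \<Rightarrow> ('g, 'n) monoid_scheme \<Rightarrow> ('f \<Rightarrow> 'g) \<Rightarrow> ('f set \<Rightarrow> 'f set) set" where
  "Wker F G mu = {a \<in> AutM_Gstar F G mu. \<forall>x \<in> carrier (Gstar F G mu).
      Mset F G mu #>\<^bsub>Gstar F G mu\<^esub> a x = Mset F G mu #>\<^bsub>Gstar F G mu\<^esub> x}"

definition etaM_W :: "('f, 'm) monoid_scheme \<Rightarrow> ('g, 'n) monoid_scheme \<Rightarrow> ('f \<Rightarrow> 'g) \<Rightarrow> ('f set \<Rightarrow> 'f set) set" where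
  "etaM_W F G mu = (\<lambda>a. restrict a (Mset F G mu)) ` Wker F G mu"

definition Wp :: "('f, 'm) monoid_scheme \<Rightarrow> ('g, 'n) monoid_scheme \<Rightarrow> ('f \<Rightarrow> 'g) \<Rightarrow> nat \<Rightarrow> ('f set \<Rightarrow> 'f set) set" where
  "Wp F G mu p = {b \<in> etaM_W F G mu. \<forall>q \<in> F_primes G. q \<noteq> p \<longrightarrow> (\<forall>m \<in> Msyl F G mu q. b m = m)}"

end

theory Submission
  imports Defs "HOL-Algebra.SndIsomorphismGrp"
begin

lemma prod_primes_dvd:
  fixes A :: "nat set"
  assumes "finite A" "\<And>p. p \<in> A \<Longrightarrow> prime p" "\<And>p. p \<in> A \<Longrightarrow> p dvd n"
  shows "\<Prod>A dvd n"
  using assms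
proof (induction A rule: finite_induct)
  case empty then show ?case by simp
next
  case (insert p A)
  have "\<not> p dvd \<Prod>A"
  proof
    assume "p dvd \<Prod>A"
    then obtain q where "q \<in> A" "p dvd q"
      using prime_dvd_prod_iff[of A p "\<lambda>x. x"] insert by auto
    then have "p = q" using insert by (metis insertCI primes_dvd_imp_eq)
    then show False using insert \<open>q \<in> A\<close> by auto
  qed
  then have "coprime p (\<Prod>A)" using insert by (simp add: prime_imp_coprime)
  then show ?case using insert by (simp add: divides_mult)
qed

lemma exists_idem_exp:
  fixes P :: "nat set"
  assumes "finite P" "\<And>p. p \<in> P \<Longrightarrow> prime p" "p \<in> P"
  shows "\<exists>e. e mod p = 1 \<and> (\<forall>q\<in>P. q \<noteq> p \<longrightarrow> q dvd e)"
proof -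
  let ?K = "\<Prod>(P - {p})"
  have "\<not> p dvd ?K"
  proof
    assume "p dvd ?K"
    then obtain q where "q \<in> P - {p}" "p dvd q"
      using prime_dvd_prod_iff[of "P - {p}" p "\<lambda>x. x"] assms by auto
    then show False using assms by (metis DiffE insertCI primes_dvd_imp_eq)
  qed
  then have "coprime ?K p" using assms by (metis prime_imp_coprime coprime_commute)
  have p1: "p > 1" using assms prime_gt_1_nat by blast
  have K0: "?K \<noteq> 0" using assms by (metis DiffD1 finite_Diff not_prime_0 prod_zero_iff)
  obtain u y where uy: "?K * u = p * y + gcd ?K p" using bezout_nat[OF K0] by blast
  then have uy': "?K * u = p * y + 1" using \<open>coprime ?K p\<close> by simp
  show ?thesis
  proof (intro exI conjI ballI impI)
    show "?K * u mod p = 1" using uy' p1 by (simp add: mod_Suc)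
    fix q assume "q \<in> P" "q \<noteq> p"
    then have "q dvd ?K" using assms by (intro dvd_prodI) auto
    then show "q dvd ?K * u" by simp
  qed
qed

locale absext = group H
  for H :: "'a monoid" (structure) +
  fixes G :: "'g monoid" and M :: "'a set" and pr :: "'a \<Rightarrow> 'g" and t :: "'g \<Rightarrow> 'a" and P :: "nat set"
  assumes grpG: "group G" and Msub: "subgroup M H"
    and Mcomm: "\<And>x y. x \<in> M \<Longrightarrow> y \<in> M \<Longrightarrow> x \<otimes>\<^bsub>H\<^esub> y = y \<otimes>\<^bsub>H\<^esub> x"
    and prhom: "pr \<in> hom H G"
    and prker: "\<And>x. x \<in> carrier H \<Longrightarrow> pr x = \<one>\<^bsub>G\<^esub> \<longleftrightarrow> x \<in> M"
    and t_car: "\<And>g. g \<in> carrier G \<Longrightarrow> t g \<in> carrier H"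
    and t_pr: "\<And>g. g \<in> carrier G \<Longrightarrow> pr (t g) = g"
    and Pfin: "finite P" and Pprime: "\<And>p. p \<in> P \<Longrightarrow> prime p"
    and Mexp: "\<And>m. m \<in> M \<Longrightarrow> m [^]\<^bsub>H\<^esub> (\<Prod>P) = \<one>\<^bsub>H\<^esub>"
begin

sublocale G: group G by (rule grpG)

sublocale prh: group_hom H G pr
  by (rule group_hom.intro[OF is_group grpG]) (simp add: group_hom_axioms_def prhom)

lemma M_car: "m \<in> M \<Longrightarrow> m \<in> carrier H"
  by (rule subgroup.mem_carrier[OF Msub])

lemma M_one: "\<one> \<in> M" by (rule subgroup.one_closed[OF Msub])
lemma M_mult: "x \<in> M \<Longrightarrow> y \<in> M \<Longrightarrow> x \<otimes> y \<in> M" by (rule subgroup.m_closed[OF Msub])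
lemma M_inv: "x \<in> M \<Longrightarrow> inv x \<in> M" by (rule subgroup.m_inv_closed[OF Msub])

lemma inv_cancel1: "x \<in> carrier H \<Longrightarrow> z \<in> carrier H \<Longrightarrow> inv x \<otimes> (x \<otimes> z) = z"
  by (simp add: m_assoc[symmetric])
lemma inv_cancel2: "x \<in> carrier H \<Longrightarrow> z \<in> carrier H \<Longrightarrow> x \<otimes> (inv x \<otimes> z) = z"
  by (simp add: m_assoc[symmetric])

lemma pr_eq_iff: "x \<in> carrier H \<Longrightarrow> y \<in> carrier H \<Longrightarrow> pr x = pr y \<longleftrightarrow> x \<otimes> inv y \<in> M"
proof -
  assume xy: "x \<in> carrier H" "y \<in> carrier H"
  have c: "x \<otimes> inv y \<in> carrier H" using xy by simp
  have 1: "pr (x \<otimes> inv y) = pr x \<otimes>\<^bsub>G\<^esub> inv\<^bsub>G\<^esub> pr y" using xy by simp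
  have 2: "pr x \<otimes>\<^bsub>G\<^esub> inv\<^bsub>G\<^esub> pr y = \<one>\<^bsub>G\<^esub> \<longleftrightarrow> pr x = pr y"
    using xy G.inv_solve_right'[of "\<one>\<^bsub>G\<^esub>" "pr x" "pr y"] by simp
  show ?thesis using prker[OF c] 1 2 by simp
qed

lemma conj_M: "x \<in> carrier H \<Longrightarrow> m \<in> M \<Longrightarrow> x \<otimes> m \<otimes> inv x \<in> M"
proof -
  assume a: "x \<in> carrier H" "m \<in> M"
  have pm: "pr m = \<one>\<^bsub>G\<^esub>" using prker a M_car by blast
  have c: "x \<otimes> m \<otimes> inv x \<in> carrier H" using a M_car by simp
  have "pr (x \<otimes> m \<otimes> inv x) = \<one>\<^bsub>G\<^esub>" using a M_car pm by simp
  then show ?thesis using prker[OF c] by blast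
qed

lemma M_normal: "M \<lhd> H"
  using normal_invI[OF Msub] conj_M by blast

lemma conj_fibre:
  assumes "x \<in> carrier H" "y \<in> carrier H" "pr x = pr y" "m \<in> M"
  shows "x \<otimes> m \<otimes> inv x = y \<otimes> m \<otimes> inv y"
proof -
  define n where "n = x \<otimes> inv y"
  have n: "n \<in> M" using assms pr_eq_iff n_def by blast
  have x: "x = n \<otimes> y" using assms n_def by (simp add: m_assoc)
  have ym: "y \<otimes> m \<otimes> inv y \<in> M" using conj_M assms by blast
  have "x \<otimes> m \<otimes> inv x = n \<otimes> (y \<otimes> m \<otimes> inv y) \<otimes> inv n"
    using x assms n M_car by (simp add: m_assoc inv_mult_group)
  also have "\<dots> = (y \<otimes> m \<otimes> inv y) \<otimes> n \<otimes> inv n" using Mcomm[OF n ym] by simp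
  also have "\<dots> = y \<otimes> m \<otimes> inv y" using n ym M_car by (simp add: m_assoc)
  finally show ?thesis .
qed

definition act :: "'g \<Rightarrow> 'a \<Rightarrow> 'a" where
  "act g m = t g \<otimes> m \<otimes> inv (t g)"

lemma act_M: "g \<in> carrier G \<Longrightarrow> m \<in> M \<Longrightarrow> act g m \<in> M"
  unfolding act_def using conj_M t_car by blast

lemma act_conj: "x \<in> carrier H \<Longrightarrow> m \<in> M \<Longrightarrow> x \<otimes> m \<otimes> inv x = act (pr x) m"
proof -
  assume a: "x \<in> carrier H" "m \<in> M"
  have "pr (t (pr x)) = pr x" using t_pr a by simp
  then show ?thesis unfolding act_def
    using conj_fibre[OF a(1) t_car[of "pr x"] _ a(2)] a by simp
qed

lemma act_swap: "x \<in> carrier H \<Longrightarrow> m \<in> M \<Longrightarrow> x \<otimes> m = act (pr x) m \<otimes> x"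
proof -
  assume a: "x \<in> carrier H" "m \<in> M"
  have "act (pr x) m \<otimes> x = x \<otimes> m \<otimes> inv x \<otimes> x" using act_conj[OF a] by simp
  also have "\<dots> = x \<otimes> m" using a M_car by (simp add: m_assoc)
  finally show ?thesis by simp
qed

lemma act_mult: "g \<in> carrier G \<Longrightarrow> m \<in> M \<Longrightarrow> m' \<in> M \<Longrightarrow> act g (m \<otimes> m') = act g m \<otimes> act g m'"
  unfolding act_def using t_car M_car by (simp add: m_assoc inv_cancel1)

lemma act_inv: "g \<in> carrier G \<Longrightarrow> m \<in> M \<Longrightarrow> act g (inv m) = inv (act g m)"
  unfolding act_def using t_car M_car by (simp add: m_assoc inv_mult_group)

lemma act_one: "g \<in> carrier G \<Longrightarrow> act g \<one> = \<one>"
  unfolding act_def using t_car by simp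

lemma M_pow: "m \<in> M \<Longrightarrow> m [^] (n::nat) \<in> M"
  by (induction n) (auto simp: M_one M_mult)

lemma act_pow: "g \<in> carrier G \<Longrightarrow> m \<in> M \<Longrightarrow> act g (m [^] (n::nat)) = act g m [^] n"
proof (induction n)
  case 0 then show ?case by (simp add: act_one)
next
  case (Suc n)
  have "m [^] n \<in> M" using Suc.prems M_pow by blast
  then show ?case using Suc by (simp add: act_mult)
qed


lemma Mlcomm: "x \<in> M \<Longrightarrow> y \<in> M \<Longrightarrow> z \<in> carrier H \<Longrightarrow> x \<otimes> (y \<otimes> z) = y \<otimes> (x \<otimes> z)"
  using Mcomm[of x y] M_car by (simp add: m_assoc[symmetric])

lemmas M_ac = m_assoc Mcomm Mlcomm

abbreviation "MG \<equiv> H\<lparr>carrier := M\<rparr>"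

lemma MG_comm_group: "comm_group MG"
proof -
  have g: "group MG" using subgroup_imp_group[OF Msub] .
  show ?thesis using group.group_comm_groupI[OF g] Mcomm by simp
qed

sublocale MG: comm_group MG by (rule MG_comm_group)

end


context absext begin

definition Syl :: "nat \<Rightarrow> 'a set" where
  "Syl p = {m \<in> M. \<exists>e::nat. m [^] (p ^ e) = \<one>}"

definition ex :: "nat \<Rightarrow> nat" where
  "ex p = (SOME e. e mod p = 1 \<and> (\<forall>q\<in>P. q \<noteq> p \<longrightarrow> q dvd e))"

definition proj :: "nat \<Rightarrow> 'a \<Rightarrow> 'a" where
  "proj p m = m [^] ex p"

lemma ex_prop: "p \<in> P \<Longrightarrow> ex p mod p = 1 \<and> (\<forall>q\<in>P. q \<noteq> p \<longrightarrow> q dvd ex p)"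
  unfolding ex_def using someI_ex[OF exists_idem_exp[OF Pfin Pprime]] by blast

lemma Syl_M: "m \<in> Syl p \<Longrightarrow> m \<in> M" unfolding Syl_def by simp

lemma pow_dvd_one: "m \<in> M \<Longrightarrow> (\<Prod>P) dvd j \<Longrightarrow> m [^] (j::nat) = \<one>"
proof -
  assume a: "m \<in> M" "(\<Prod>P) dvd j"
  then obtain c where "j = (\<Prod>P) * c" by blast
  then have "m [^] j = (m [^] (\<Prod>P)) [^] c" using a M_car by (simp add: nat_pow_pow)
  then show ?thesis using Mexp[OF a(1)] by simp
qed

lemma pow_mod_eq: "m \<in> carrier H \<Longrightarrow> m [^] (p::nat) = \<one> \<Longrightarrow> m [^] (j::nat) = m [^] (j mod p)"
proof -
  assume a: "m \<in> carrier H" "m [^] p = \<one>"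
  have "j = p * (j div p) + j mod p" by simp
  then have "m [^] j = (m [^] p) [^] (j div p) \<otimes> m [^] (j mod p)"
    using a by (metis nat_pow_mult nat_pow_pow)
  then show ?thesis using a by simp
qed

lemma Syl_pow_p: assumes "p \<in> P" "m \<in> Syl p" shows "m [^] p = \<one>"
proof -
  from assms obtain e where mM: "m \<in> M" and e: "m [^] (p ^ e) = \<one>" unfolding Syl_def by blast
  have mc: "m \<in> carrier H" using mM M_car by simp
  have pp: "prime p" using assms Pprime by simp
  have k: "m [^] (\<Prod>P) = \<one>" using Mexp mM by simp
  have pe0: "p ^ e \<noteq> 0" using pp by (simp add: prime_gt_0_nat)
  obtain x y where xy: "p ^ e * x = (\<Prod>P) * y + gcd (p ^ e) (\<Prod>P)"
    using bezout_nat[OF pe0] by blast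
  have "m [^] (p ^ e * x) = \<one>" using e mc by (simp add: nat_pow_pow[symmetric])
  moreover have "m [^] ((\<Prod>P) * y + gcd (p ^ e) (\<Prod>P)) = m [^] gcd (p ^ e) (\<Prod>P)"
    using k mc by (simp add: nat_pow_mult[symmetric] nat_pow_pow[symmetric])
  ultimately have g1: "m [^] gcd (p ^ e) (\<Prod>P) = \<one>" using xy by simp
  have "gcd (p ^ e) (\<Prod>P) dvd p ^ e" by simp
  then obtain i where i: "i \<le> e" "gcd (p ^ e) (\<Prod>P) = p ^ i"
    using pp by (metis divides_primepow_nat)
  have "i \<le> 1"
  proof (rule ccontr)
    assume "\<not> i \<le> 1"
    then have "p ^ 2 dvd p ^ i" by (simp add: le_imp_power_dvd)
    then have "p ^ 2 dvd \<Prod>P" using i by (metis gcd_dvd2 dvd_trans)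
    moreover have "\<Prod>P = p * \<Prod>(P - {p})" using assms Pfin by (metis prod.remove)
    ultimately have "p dvd \<Prod>(P - {p})" using pp by (simp add: power2_eq_square prime_gt_0_nat)
    then obtain q where q: "q \<in> P - {p}" "p dvd q"
      using prime_dvd_prod_iff[of "P - {p}" p "\<lambda>x. x"] pp Pfin by auto
    then have "p = q" using Pprime pp by (metis DiffD1 primes_dvd_imp_eq)
    then show False using q by simp
  qed
  then have "p ^ i dvd p" using i by (cases i) auto
  then obtain c where "p = p ^ i * c" by blast
  then have "m [^] p = (m [^] (p ^ i)) [^] c" using mc by (metis nat_pow_pow)
  then show ?thesis using g1 i by simp
qed

lemma Syl_iff: "p \<in> P \<Longrightarrow> m \<in> Syl p \<longleftrightarrow> m \<in> M \<and> m [^] p = \<one>"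
proof
  assume "p \<in> P" "m \<in> Syl p" then show "m \<in> M \<and> m [^] p = \<one>" using Syl_pow_p Syl_M by blast
next
  assume "m \<in> M \<and> m [^] p = \<one>"
  then show "m \<in> Syl p" unfolding Syl_def by (metis (mono_tags, lifting) mem_Collect_eq power_one_right)
qed

lemma proj_M: "m \<in> M \<Longrightarrow> proj p m \<in> M" unfolding proj_def by (rule M_pow)

lemma proj_Syl: assumes "p \<in> P" "m \<in> M" shows "proj p m \<in> Syl p"
proof -
  have "(\<Prod>P) dvd ex p * p"
  proof (rule prod_primes_dvd[OF Pfin Pprime])
    fix q assume "q \<in> P"
    then show "q dvd ex p * p" using ex_prop[OF assms(1)] by (cases "q = p") auto
  qed
  then have "proj p m [^] p = \<one>"
    unfolding proj_def using assms M_car pow_dvd_one by (simp add: nat_pow_pow)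
  then show ?thesis using Syl_iff[OF assms(1)] proj_M assms by blast
qed

lemma proj_on_Syl: assumes "p \<in> P" "q \<in> P" "m \<in> Syl p"
  shows "proj q m = (if q = p then m else \<one>)"
proof -
  have mc: "m \<in> carrier H" using assms Syl_M M_car by blast
  have mp: "m [^] p = \<one>" using Syl_pow_p assms by blast
  have "proj q m = m [^] (ex q mod p)" unfolding proj_def using pow_mod_eq[OF mc mp] by blast
  moreover have "q = p \<Longrightarrow> ex q mod p = 1" using ex_prop assms by blast
  moreover have "q \<noteq> p \<Longrightarrow> ex q mod p = 0" using ex_prop[OF assms(2)] assms by auto
  ultimately show ?thesis using mc by auto
qed

lemma proj_mult: "x \<in> M \<Longrightarrow> y \<in> M \<Longrightarrow> proj p (x \<otimes> y) = proj p x \<otimes> proj p y"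
  unfolding proj_def using pow_mult_distrib Mcomm M_car by blast

lemma proj_inv: "x \<in> M \<Longrightarrow> proj p (inv x) = inv (proj p x)"
  unfolding proj_def using M_car by (simp add: nat_pow_inv)

lemma proj_act: "g \<in> carrier G \<Longrightarrow> m \<in> M \<Longrightarrow> proj p (act g m) = act g (proj p m)"
  unfolding proj_def using act_pow by simp

lemma proj_hom: "proj p \<in> hom MG MG"
  by (rule homI) (auto simp: proj_M proj_mult)

lemma hom_proj_comm:
  assumes "a \<in> hom MG MG" "m \<in> M" shows "a (proj p m) = proj p (a m)"
  unfolding proj_def using hom_nat_pow[OF assms(1), of m] assms MG.is_group
  by (simp add: nat_pow_consistent[symmetric])

lemma Syl_sub: "p \<in> P \<Longrightarrow> subgroup (Syl p) H"
proof (rule subgroupI)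
  assume p: "p \<in> P"
  show "Syl p \<subseteq> carrier H" using Syl_M M_car by blast
  have "\<one> \<in> Syl p" using M_one Syl_iff[OF p, of "\<one>"] by simp
  then show "Syl p \<noteq> {}" by blast
  fix x y assume xy: "x \<in> Syl p" "y \<in> Syl p"
  then have xyM: "x \<in> M" "y \<in> M" using Syl_M by auto
  have "inv x [^] p = \<one>" using xy p Syl_iff xyM M_car by (simp add: nat_pow_inv)
  then show "inv x \<in> Syl p" using Syl_iff p M_inv xyM by auto
  have "(x \<otimes> y) [^] p = \<one>" using pow_mult_distrib[OF Mcomm[OF xyM]] xy xyM M_car Syl_iff p by simp
  then show "x \<otimes> y \<in> Syl p" using Syl_iff p M_mult xyM by auto
qed

lemma finprod_pow:
  assumes "finite A" "m \<in> M" shows "finprod MG (\<lambda>q. m [^] (f q :: nat)) A = m [^] (sum f A)"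
  using assms(1)
proof (induction A rule: finite_induct)
  case empty then show ?case by simp
next
  case (insert x A)
  have "finprod MG (\<lambda>q. m [^] f q) (insert x A) = m [^] f x \<otimes> finprod MG (\<lambda>q. m [^] f q) A"
    using insert assms M_pow by (subst MG.finprod_insert) auto
  then show ?case using insert assms M_car by (simp add: nat_pow_mult)
qed

lemma decomp: assumes "m \<in> M" shows "finprod MG (\<lambda>q. proj q m) P = m"
proof (cases "P = {}")
  case True
  then have "m = \<one>" using Mexp[OF assms] M_car assms by simp
  then show ?thesis using True by simp
next
  case False
  let ?S = "sum ex P"
  have "?S mod p = 1" if p: "p \<in> P" for p
  proof -
    have "?S = ex p + sum ex (P - {p})" using p Pfin by (simp add: sum.remove)
    moreover have "p dvd sum ex (P - {p})" using ex_prop p by (intro dvd_sum) auto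
    moreover have "ex p mod p = 1" using ex_prop p by simp
    ultimately show ?thesis by (metis mod_add_right_eq add.right_neutral dvd_imp_mod_0)
  qed
  note Smod = this
  obtain p0 where "p0 \<in> P" using False by blast
  then have "?S mod p0 = 1" using Smod by blast
  then have "?S \<noteq> 0" by (metis mod_0 zero_neq_one)
  then have S1: "?S \<ge> 1" by simp
  have "(\<Prod>P) dvd ?S - 1"
  proof (rule prod_primes_dvd[OF Pfin Pprime])
    fix p assume p: "p \<in> P"
    have "p > 1" using Pprime[OF p] prime_gt_1_nat by blast
    then have e: "?S mod p = 1 mod p" using p Smod by simp
    show "p dvd ?S - 1" using mod_eq_dvd_iff_nat[OF S1, of p] e by argo
  qed
  then have "m [^] (?S - 1) = \<one>" using pow_dvd_one assms by blast
  moreover have "m [^] ?S = m [^] (?S - 1) \<otimes> m [^] (1::nat)"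
    using S1 assms M_car nat_pow_mult[of m "?S - 1" 1] by simp
  ultimately have "m [^] ?S = m" using assms M_car by simp
  then show ?thesis unfolding proj_def using finprod_pow[OF Pfin assms] by simp
qed

lemma hom_finprod:
  assumes "a \<in> hom MG MG" "finite A" "f \<in> A \<rightarrow> M"
  shows "a (finprod MG f A) = finprod MG (\<lambda>x. a (f x)) A"
  using assms(2,3)
proof (induction A rule: finite_induct)
  case empty
  then show ?case using hom_one[OF assms(1) MG.is_group MG.is_group] by simp
next
  case (insert x A)
  have fx: "f x \<in> M" and fA: "f \<in> A \<rightarrow> M" using insert.prems by auto
  have afx: "a (f x) \<in> M" using hom_in_carrier[OF assms(1), of "f x"] fx by simp
  have afA: "(\<lambda>x. a (f x)) \<in> A \<rightarrow> M"
  proof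
    fix y assume "y \<in> A" then show "a (f y) \<in> M" using hom_in_carrier[OF assms(1), of "f y"] fA by auto
  qed
  have cl: "finprod MG f A \<in> M" using MG.finprod_closed[of f A] fA by simp
  have "a (finprod MG f (insert x A)) = a (f x \<otimes>\<^bsub>MG\<^esub> finprod MG f A)"
    using insert fA fx by simp
  also have "\<dots> = a (f x) \<otimes>\<^bsub>MG\<^esub> a (finprod MG f A)"
    using hom_mult[OF assms(1), of "f x" "finprod MG f A"] fx cl by simp
  also have "\<dots> = finprod MG (\<lambda>x. a (f x)) (insert x A)"
    using insert afA afx by simp
  finally show ?case .
qed

lemma hom_eq_on_Syl:
  assumes "a \<in> hom MG MG" "b \<in> hom MG MG" "\<And>p m. p \<in> P \<Longrightarrow> m \<in> Syl p \<Longrightarrow> a m = b m"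
    "m \<in> M"
  shows "a m = b m"
proof -
  have f: "(\<lambda>q. proj q m) \<in> P \<rightarrow> M" using proj_M assms by auto
  have "a m = finprod MG (\<lambda>q. a (proj q m)) P"
    using hom_finprod[OF assms(1) Pfin f] decomp[OF assms(4)] by simp
  also have "\<dots> = finprod MG (\<lambda>q. b (proj q m)) P"
  proof (rule MG.finprod_cong')
    show "P = P" ..
    show "(\<lambda>q. b (proj q m)) \<in> P \<rightarrow> carrier MG"
    proof
      fix q assume q: "q \<in> P"
      show "b (proj q m) \<in> carrier MG" using hom_in_carrier[OF assms(2), of "proj q m"] proj_M assms by simp
    qed
    fix q assume q: "q \<in> P"
    show "a (proj q m) = b (proj q m)" using assms proj_Syl q by blast
  qed
  also have "\<dots> = b m"
    using hom_finprod[OF assms(2) Pfin f] decomp[OF assms(4)] by simp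
  finally show ?thesis .
qed

lemma proj_finprod:
  assumes "p \<in> P" "\<And>q. q \<in> P \<Longrightarrow> x q \<in> Syl q"
  shows "proj p (finprod MG x P) = x p"
proof -
  have f: "x \<in> P \<rightarrow> M" using assms Syl_M by auto
  have "proj p (finprod MG x P) = finprod MG (\<lambda>q. proj p (x q)) P"
    using hom_finprod[OF proj_hom Pfin f] by simp
  also have "\<dots> = finprod MG (\<lambda>q. if p = q then x q else \<one>\<^bsub>MG\<^esub>) P"
    using assms proj_on_Syl Syl_M M_one f by (intro MG.finprod_cong') (auto simp: Pi_def)
  also have "\<dots> = x p" using MG.finprod_singleton[OF assms(1) Pfin] f by auto
  finally show ?thesis .
qed

end


context absext begin

definition W :: "('a \<Rightarrow> 'a) set" where
  "W = {a \<in> iso H H. a ` M = M \<and> (\<forall>x\<in>carrier H. M #> a x = M #> x)}"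

lemma W_hom: "a \<in> W \<Longrightarrow> a \<in> hom H H"
  unfolding W_def iso_def by blast

lemma W_ghom: "a \<in> W \<Longrightarrow> group_hom H H a"
  using W_hom by (simp add: group_hom_def group_hom_axioms_def is_group)

lemma W_car: "a \<in> W \<Longrightarrow> x \<in> carrier H \<Longrightarrow> a x \<in> carrier H"
  by (rule hom_in_carrier[OF W_hom])

lemma W_M: "a \<in> W \<Longrightarrow> m \<in> M \<Longrightarrow> a m \<in> M"
  unfolding W_def by blast

lemma W_inj: "a \<in> W \<Longrightarrow> inj_on a (carrier H)"
  unfolding W_def iso_def bij_betw_def by blast

lemma W_coset: assumes "a \<in> W" "x \<in> carrier H" shows "a x \<otimes> inv x \<in> M"
proof -
  have ax: "a x \<in> carrier H" using W_car assms by blast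
  have "a x \<in> M #> a x" using rcos_self[OF ax Msub] .
  also have "M #> a x = M #> x" using assms unfolding W_def by blast
  finally obtain m where m: "m \<in> M" "a x = m \<otimes> x" unfolding r_coset_def by blast
  then show ?thesis using assms M_car by (simp add: m_assoc)
qed

lemma W_pr: "a \<in> W \<Longrightarrow> x \<in> carrier H \<Longrightarrow> pr (a x) = pr x"
  using pr_eq_iff[OF W_car] W_coset by blast

lemma coset_eqI: assumes "x \<in> carrier H" "y \<in> carrier H" "y \<otimes> inv x \<in> M"
  shows "M #> y = M #> x"
proof -
  have "y = (y \<otimes> inv x) \<otimes> x" using assms by (simp add: m_assoc)
  then have "y \<in> M #> x" unfolding r_coset_def using assms(3) by blast
  then show ?thesis using repr_independence[OF _ assms(1) Msub] by simp
qed

lemma W_act: assumes "a \<in> W" "g \<in> carrier G" "m \<in> M" shows "a (act g m) = act g (a m)"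
proof -
  interpret ah: group_hom H H a using W_ghom assms by blast
  have tc: "t g \<in> carrier H" using t_car assms by blast
  have mc: "m \<in> carrier H" using M_car assms by blast
  have "a (act g m) = a (t g) \<otimes> a m \<otimes> inv (a (t g))" unfolding act_def using tc mc by simp
  also have "\<dots> = act (pr (a (t g))) (a m)"
    using act_conj[of "a (t g)" "a m"] W_car W_M assms tc by blast
  also have "pr (a (t g)) = g" using W_pr assms tc t_pr by simp
  finally show ?thesis .
qed

end

locale absext_eps = absext H G M pr t P
  for H :: "'a monoid" (structure) and G :: "'g monoid" and M pr t P +
  fixes s :: "'g \<Rightarrow> 'a" and eps :: "'g \<Rightarrow> 'g \<Rightarrow> 'a" and epsp :: "nat \<Rightarrow> 'g \<Rightarrow> 'g \<Rightarrow> 'a"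
  assumes s_car: "\<And>g. g \<in> carrier G \<Longrightarrow> s g \<in> carrier H"
    and s_pr: "\<And>g. g \<in> carrier G \<Longrightarrow> pr (s g) = g"
    and eps_def: "\<And>g h. g \<in> carrier G \<Longrightarrow> h \<in> carrier G \<Longrightarrow>
                    eps g h = s g \<otimes>\<^bsub>H\<^esub> s h \<otimes>\<^bsub>H\<^esub> inv\<^bsub>H\<^esub> (s (g \<otimes>\<^bsub>G\<^esub> h))"
    and epsp_Syl: "\<And>p g h. p \<in> P \<Longrightarrow> g \<in> carrier G \<Longrightarrow> h \<in> carrier G \<Longrightarrow> epsp p g h \<in> Syl p"
    and eps_prod: "\<And>g h. g \<in> carrier G \<Longrightarrow> h \<in> carrier G \<Longrightarrow>
                    eps g h = finprod (H\<lparr>carrier := M\<rparr>) (\<lambda>p. epsp p g h) P"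
begin

lemma eps_M: assumes "g \<in> carrier G" "h \<in> carrier G" shows "eps g h \<in> M"
proof -
  have c: "s g \<otimes> s h \<in> carrier H" "s (g \<otimes>\<^bsub>G\<^esub> h) \<in> carrier H" using s_car assms by auto
  have "pr (s g \<otimes> s h) = pr (s (g \<otimes>\<^bsub>G\<^esub> h))" using assms s_car s_pr by simp
  then show ?thesis using pr_eq_iff[OF c] eps_def assms by simp
qed

lemma eps_car: "g \<in> carrier G \<Longrightarrow> h \<in> carrier G \<Longrightarrow> eps g h \<in> carrier H"
  using eps_M M_car by blast

lemma s_mult: assumes "g \<in> carrier G" "h \<in> carrier G"
  shows "s g \<otimes> s h = eps g h \<otimes> s (g \<otimes>\<^bsub>G\<^esub> h)"
  using eps_def[OF assms] s_car assms by (simp add: m_assoc)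

lemma proj_eps: "p \<in> P \<Longrightarrow> g \<in> carrier G \<Longrightarrow> h \<in> carrier G \<Longrightarrow> proj p (eps g h) = epsp p g h"
  using eps_prod proj_finprod epsp_Syl by simp

definition cocyc :: "('a \<Rightarrow> 'a) \<Rightarrow> ('g \<Rightarrow> 'a) \<Rightarrow> bool" where
  "cocyc \<alpha> \<psi> = ((\<forall>g\<in>carrier G. \<psi> g \<in> M) \<and> (\<forall>g\<in>carrier G. \<forall>h\<in>carrier G.
     \<alpha> (eps g h) = eps g h \<otimes> act g (\<psi> h) \<otimes> inv (\<psi> (g \<otimes>\<^bsub>G\<^esub> h)) \<otimes> \<psi> g))"

lemma W_cocycle: assumes "a \<in> W" shows "\<exists>\<psi>. cocyc a \<psi>"
proof -
  interpret ah: group_hom H H a using W_ghom assms by blast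
  define \<psi> where "\<psi> g = a (s g) \<otimes> inv (s g)" for g
  have \<psi>M: "\<psi> g \<in> M" if "g \<in> carrier G" for g
    unfolding \<psi>_def using W_coset assms s_car that by blast
  have as: "a (s g) = \<psi> g \<otimes> s g" if "g \<in> carrier G" for g
    unfolding \<psi>_def using s_car that W_car assms by (simp add: m_assoc)
  have "a (eps g h) = eps g h \<otimes> act g (\<psi> h) \<otimes> inv (\<psi> (g \<otimes>\<^bsub>G\<^esub> h)) \<otimes> \<psi> g"
    if g: "g \<in> carrier G" and h: "h \<in> carrier G" for g h
  proof -
    have gh: "g \<otimes>\<^bsub>G\<^esub> h \<in> carrier G" using g h by simp
    note cs = s_car[OF g] s_car[OF h] s_car[OF gh]
    note cM = \<psi>M[OF g] \<psi>M[OF h] \<psi>M[OF gh]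
    note cc = M_car[OF cM(1)] M_car[OF cM(2)] M_car[OF cM(3)]
    have ac: "act g (\<psi> h) \<in> M" using act_M g cM by blast
    have e: "eps g h \<in> M" using eps_M g h by blast
    have "a (eps g h) = a (s g) \<otimes> a (s h) \<otimes> inv (a (s (g \<otimes>\<^bsub>G\<^esub> h)))"
      using eps_def[OF g h] cs by simp
    also have "\<dots> = \<psi> g \<otimes> (s g \<otimes> \<psi> h) \<otimes> s h \<otimes> inv (s (g \<otimes>\<^bsub>G\<^esub> h)) \<otimes> inv (\<psi> (g \<otimes>\<^bsub>G\<^esub> h))"
      using as g h gh cs cc by (simp add: m_assoc inv_mult_group)
    also have "s g \<otimes> \<psi> h = act g (\<psi> h) \<otimes> s g"
      using act_swap[OF cs(1) cM(2)] s_pr g by simp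
    also have "\<psi> g \<otimes> (act g (\<psi> h) \<otimes> s g) \<otimes> s h \<otimes> inv (s (g \<otimes>\<^bsub>G\<^esub> h)) \<otimes> inv (\<psi> (g \<otimes>\<^bsub>G\<^esub> h))
        = \<psi> g \<otimes> act g (\<psi> h) \<otimes> eps g h \<otimes> inv (\<psi> (g \<otimes>\<^bsub>G\<^esub> h))"
      using eps_def[OF g h] cs cc M_car[OF ac] by (simp add: m_assoc)
    also have "\<dots> = eps g h \<otimes> act g (\<psi> h) \<otimes> inv (\<psi> (g \<otimes>\<^bsub>G\<^esub> h)) \<otimes> \<psi> g"
      using cM ac e M_inv M_car by (simp add: M_ac)
    finally show ?thesis .
  qed
  then show ?thesis unfolding cocyc_def using \<psi>M by blast
qed

end


context absext_eps begin

lemma pr_Ms: "n \<in> M \<Longrightarrow> g \<in> carrier G \<Longrightarrow> pr (n \<otimes> s g) = g"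
proof -
  assume a: "n \<in> M" "g \<in> carrier G"
  have "pr n = \<one>\<^bsub>G\<^esub>" using prker a M_car by blast
  then show ?thesis using a M_car s_car s_pr by simp
qed

lemma ms_M: "x \<in> carrier H \<Longrightarrow> x \<otimes> inv (s (pr x)) \<in> M"
  using pr_eq_iff[of x "s (pr x)"] s_car s_pr by simp

lemma x_decomp: "x \<in> carrier H \<Longrightarrow> x = (x \<otimes> inv (s (pr x))) \<otimes> s (pr x)"
  using s_car by (simp add: m_assoc)

lemma act_one_G: assumes "n \<in> M" shows "act \<one>\<^bsub>G\<^esub> n = n"
proof -
  have "t \<one>\<^bsub>G\<^esub> \<in> M" using prker[of "t \<one>\<^bsub>G\<^esub>"] t_car t_pr by simp
  then show ?thesis unfolding act_def using Mcomm[of "t \<one>\<^bsub>G\<^esub>" n] assms M_car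
    by (simp add: m_assoc)
qed

lemma construct:
  assumes hom: "\<alpha> \<in> hom MG MG" and bij: "bij_betw \<alpha> M M"
    and comm: "\<And>g m. g \<in> carrier G \<Longrightarrow> m \<in> M \<Longrightarrow> \<alpha> (act g m) = act g (\<alpha> m)"
    and coc: "cocyc \<alpha> \<psi>"
  shows "\<exists>a\<in>W. \<forall>m\<in>M. a m = \<alpha> m"
proof -
  have \<alpha>M: "\<alpha> m \<in> M" if "m \<in> M" for m using hom_in_carrier[OF hom, of m] that by simp
  have \<alpha>mult: "\<alpha> (x \<otimes> y) = \<alpha> x \<otimes> \<alpha> y" if "x \<in> M" "y \<in> M" for x y
    using hom_mult[OF hom, of x y] that by simp
  have \<alpha>one: "\<alpha> \<one> = \<one>" using hom_one[OF hom MG.is_group MG.is_group] by simp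
  have \<alpha>inv: "\<alpha> (inv x) = inv (\<alpha> x)" if "x \<in> M" for x
  proof -
    have "\<alpha> (inv x) \<otimes> \<alpha> x = \<one>" using \<alpha>mult[of "inv x" x] that M_inv \<alpha>one M_car by simp
    then show ?thesis using inv_equality[of "\<alpha> (inv x)" "\<alpha> x"] \<alpha>M that M_inv M_car by simp
  qed
  have \<psi>M: "\<psi> g \<in> M" if "g \<in> carrier G" for g using coc that unfolding cocyc_def by blast
  have cocE: "\<alpha> (eps g h) = eps g h \<otimes> act g (\<psi> h) \<otimes> inv (\<psi> (g \<otimes>\<^bsub>G\<^esub> h)) \<otimes> \<psi> g"
    if "g \<in> carrier G" "h \<in> carrier G" for g h using coc that unfolding cocyc_def by blast
  define a where "a x = \<alpha> (x \<otimes> inv (s (pr x))) \<otimes> \<psi> (pr x) \<otimes> s (pr x)" for x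
  have prc: "pr x \<in> carrier G" if "x \<in> carrier H" for x using that by simp
  have a_car: "a x \<in> carrier H" if x: "x \<in> carrier H" for x
    unfolding a_def using \<alpha>M[OF ms_M[OF x]] \<psi>M[OF prc[OF x]] s_car[OF prc[OF x]] M_car by simp
  have a_pr: "pr (a x) = pr x" if x: "x \<in> carrier H" for x
  proof -
    have "\<alpha> (x \<otimes> inv (s (pr x))) \<otimes> \<psi> (pr x) \<in> M" using \<alpha>M[OF ms_M[OF x]] \<psi>M[OF prc[OF x]] M_mult by blast
    then show ?thesis unfolding a_def using pr_Ms prc[OF x] by blast
  qed
  have a_mult: "a (x \<otimes> y) = a x \<otimes> a y" if x: "x \<in> carrier H" and y: "y \<in> carrier H" for x y
  proof -
    define g where "g = pr x"
    define h where "h = pr y"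
    have g: "g \<in> carrier G" and h: "h \<in> carrier G" using g_def h_def x y by auto
    have gh: "g \<otimes>\<^bsub>G\<^esub> h \<in> carrier G" using g h by simp
    have prxy: "pr (x \<otimes> y) = g \<otimes>\<^bsub>G\<^esub> h" using x y g_def h_def by simp
    define m1 where "m1 = x \<otimes> inv (s g)"
    define m2 where "m2 = y \<otimes> inv (s h)"
    have m1: "m1 \<in> M" and m2: "m2 \<in> M" using ms_M x y m1_def m2_def g_def h_def by auto
    note cs = s_car[OF g] s_car[OF h] s_car[OF gh]
    have am2: "act g m2 \<in> M" using act_M g m2 by blast
    have e: "eps g h \<in> M" using eps_M g h by blast
    have "m1 \<otimes> act g m2 \<otimes> eps g h = m1 \<otimes> (s g \<otimes> m2 \<otimes> inv (s g)) \<otimes> (s g \<otimes> s h \<otimes> inv (s (g \<otimes>\<^bsub>G\<^esub> h)))"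
      using act_conj[OF cs(1) m2] s_pr g eps_def[OF g h] by simp
    also have "\<dots> = x \<otimes> y \<otimes> inv (s (g \<otimes>\<^bsub>G\<^esub> h))"
      unfolding m1_def m2_def using x y cs by (simp add: m_assoc inv_cancel1)
    finally have m12: "x \<otimes> y \<otimes> inv (s (pr (x \<otimes> y))) = m1 \<otimes> act g m2 \<otimes> eps g h" using prxy by simp
    have "a (x \<otimes> y) = \<alpha> (m1 \<otimes> act g m2 \<otimes> eps g h) \<otimes> \<psi> (g \<otimes>\<^bsub>G\<^esub> h) \<otimes> s (g \<otimes>\<^bsub>G\<^esub> h)"
      unfolding a_def using m12 prxy by simp
    also have "\<alpha> (m1 \<otimes> act g m2 \<otimes> eps g h) = \<alpha> m1 \<otimes> act g (\<alpha> m2) \<otimes>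
        (eps g h \<otimes> act g (\<psi> h) \<otimes> inv (\<psi> (g \<otimes>\<^bsub>G\<^esub> h)) \<otimes> \<psi> g)"
      using \<alpha>mult m1 am2 e M_mult comm[OF g m2] cocE[OF g h] by simp
    finally have L: "a (x \<otimes> y) = \<alpha> m1 \<otimes> act g (\<alpha> m2) \<otimes>
        (eps g h \<otimes> act g (\<psi> h) \<otimes> inv (\<psi> (g \<otimes>\<^bsub>G\<^esub> h)) \<otimes> \<psi> g) \<otimes> \<psi> (g \<otimes>\<^bsub>G\<^esub> h) \<otimes> s (g \<otimes>\<^bsub>G\<^esub> h)" .
    have A: "\<alpha> m1 \<in> M" using \<alpha>M m1 by blast
    have B: "act g (\<alpha> m2) \<in> M" using \<alpha>M m2 act_M g by blast
    have C: "act g (\<psi> h) \<in> M" using \<psi>M h act_M g by blast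
    have D: "\<psi> (g \<otimes>\<^bsub>G\<^esub> h) \<in> M" using \<psi>M gh by blast
    have F: "\<psi> g \<in> M" using \<psi>M g by blast
    have iD: "inv (\<psi> (g \<otimes>\<^bsub>G\<^esub> h)) \<in> M" using D M_inv by blast
    have "eps g h \<otimes> act g (\<psi> h) \<otimes> inv (\<psi> (g \<otimes>\<^bsub>G\<^esub> h)) \<otimes> \<psi> g \<otimes> \<psi> (g \<otimes>\<^bsub>G\<^esub> h)
        = eps g h \<otimes> act g (\<psi> h) \<otimes> (inv (\<psi> (g \<otimes>\<^bsub>G\<^esub> h)) \<otimes> \<psi> g) \<otimes> \<psi> (g \<otimes>\<^bsub>G\<^esub> h)"
      using e C D F M_car iD by (simp add: m_assoc)
    also have "inv (\<psi> (g \<otimes>\<^bsub>G\<^esub> h)) \<otimes> \<psi> g = \<psi> g \<otimes> inv (\<psi> (g \<otimes>\<^bsub>G\<^esub> h))"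
      using Mcomm[OF iD F] .
    also have "eps g h \<otimes> act g (\<psi> h) \<otimes> (\<psi> g \<otimes> inv (\<psi> (g \<otimes>\<^bsub>G\<^esub> h))) \<otimes> \<psi> (g \<otimes>\<^bsub>G\<^esub> h)
        = eps g h \<otimes> act g (\<psi> h) \<otimes> \<psi> g"
      using e C D F M_car iD by (simp add: m_assoc)
    finally have K: "eps g h \<otimes> act g (\<psi> h) \<otimes> inv (\<psi> (g \<otimes>\<^bsub>G\<^esub> h)) \<otimes> \<psi> g \<otimes> \<psi> (g \<otimes>\<^bsub>G\<^esub> h)
        = eps g h \<otimes> act g (\<psi> h) \<otimes> \<psi> g" .
    have L2: "a (x \<otimes> y) = \<alpha> m1 \<otimes> act g (\<alpha> m2) \<otimes> (eps g h \<otimes> act g (\<psi> h) \<otimes> \<psi> g) \<otimes> s (g \<otimes>\<^bsub>G\<^esub> h)"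
    proof -
      have KK: "inv (\<psi> (g \<otimes>\<^bsub>G\<^esub> h)) \<otimes> (\<psi> g \<otimes> (\<psi> (g \<otimes>\<^bsub>G\<^esub> h) \<otimes> s (g \<otimes>\<^bsub>G\<^esub> h))) = \<psi> g \<otimes> s (g \<otimes>\<^bsub>G\<^esub> h)"
        using Mlcomm[OF F D cs(3)] inv_cancel1 M_car F D cs by simp
      show ?thesis using L KK A B C D F e iD M_car cs by (simp add: m_assoc)
    qed
    have "a x \<otimes> a y = \<alpha> m1 \<otimes> \<psi> g \<otimes> s g \<otimes> (\<alpha> m2 \<otimes> \<psi> h \<otimes> s h)"
      unfolding a_def m1_def m2_def g_def h_def by simp
    also have "\<dots> = \<alpha> m1 \<otimes> \<psi> g \<otimes> (s g \<otimes> (\<alpha> m2 \<otimes> \<psi> h)) \<otimes> s h"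
      using A F cs \<alpha>M m2 \<psi>M h M_car by (simp add: m_assoc)
    also have "s g \<otimes> (\<alpha> m2 \<otimes> \<psi> h) = act g (\<alpha> m2 \<otimes> \<psi> h) \<otimes> s g"
      using act_swap[OF cs(1), of "\<alpha> m2 \<otimes> \<psi> h"] \<alpha>M m2 \<psi>M h M_mult s_pr g by simp
    also have "act g (\<alpha> m2 \<otimes> \<psi> h) = act g (\<alpha> m2) \<otimes> act g (\<psi> h)"
      using act_mult g \<alpha>M m2 \<psi>M h by blast
    also have "\<alpha> m1 \<otimes> \<psi> g \<otimes> (act g (\<alpha> m2) \<otimes> act g (\<psi> h) \<otimes> s g) \<otimes> s h
       = \<alpha> m1 \<otimes> \<psi> g \<otimes> act g (\<alpha> m2) \<otimes> act g (\<psi> h) \<otimes> (s g \<otimes> s h)"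
      using A B C F cs M_car by (simp add: m_assoc)
    also have "s g \<otimes> s h = eps g h \<otimes> s (g \<otimes>\<^bsub>G\<^esub> h)" using s_mult g h by blast
    finally have R: "a x \<otimes> a y = \<alpha> m1 \<otimes> \<psi> g \<otimes> act g (\<alpha> m2) \<otimes> act g (\<psi> h) \<otimes> (eps g h \<otimes> s (g \<otimes>\<^bsub>G\<^esub> h))" .
    have "\<alpha> m1 \<otimes> act g (\<alpha> m2) \<otimes> (eps g h \<otimes> act g (\<psi> h) \<otimes> \<psi> g)
        = \<alpha> m1 \<otimes> \<psi> g \<otimes> act g (\<alpha> m2) \<otimes> act g (\<psi> h) \<otimes> eps g h"
      using A B C F e M_car by (simp add: M_ac)
    then show ?thesis using L2 R A B C F e M_car cs by (simp add: m_assoc)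
  qed
  have a_hom: "a \<in> hom H H" by (rule homI) (auto simp: a_car a_mult)
  have a_on_M: "a m = \<alpha> m" if m: "m \<in> M" for m
  proof -
    let ?e = "\<one>\<^bsub>G\<^esub>"
    have mc: "m \<in> carrier H" using M_car m by blast
    have pm: "pr m = ?e" using prker mc m by blast
    have e: "?e \<in> carrier G" by simp
    have seM: "s ?e \<in> M" using prker[of "s ?e"] s_car s_pr e by simp
    have pe: "\<psi> ?e \<in> M" using \<psi>M e by blast
    have "eps ?e ?e = s ?e" using eps_def[OF e e] s_car[OF e] by (simp add: m_assoc)
    then have "\<alpha> (s ?e) = s ?e \<otimes> act ?e (\<psi> ?e) \<otimes> inv (\<psi> ?e) \<otimes> \<psi> ?e"
      using cocE[OF e e] by simp
    also have "\<dots> = s ?e \<otimes> \<psi> ?e" using act_one_G[OF pe] seM pe M_car by (simp add: m_assoc)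
    finally have ase: "\<alpha> (s ?e) = s ?e \<otimes> \<psi> ?e" .
    have "a m = \<alpha> (m \<otimes> inv (s ?e)) \<otimes> \<psi> ?e \<otimes> s ?e" unfolding a_def using pm by simp
    also have "\<alpha> (m \<otimes> inv (s ?e)) = \<alpha> m \<otimes> inv (\<alpha> (s ?e))"
      using \<alpha>mult[OF m M_inv[OF seM]] \<alpha>inv[OF seM] by simp
    also have "inv (\<alpha> (s ?e)) = inv (\<psi> ?e \<otimes> s ?e)" using ase Mcomm[OF seM pe] by simp
    also have "\<alpha> m \<otimes> inv (\<psi> ?e \<otimes> s ?e) \<otimes> \<psi> ?e \<otimes> s ?e = \<alpha> m"
      using \<alpha>M[OF m] seM pe M_car by (simp add: m_assoc inv_mult_group inv_cancel1)
    finally show ?thesis .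
  qed
  have aM: "a ` M = M"
  proof -
    have "a ` M = \<alpha> ` M" using a_on_M by (simp cong: image_cong)
    then show ?thesis using bij bij_betw_imp_surj_on by metis
  qed
  have a_coset: "M #> a x = M #> x" if x: "x \<in> carrier H" for x
  proof -
    define m1 where "m1 = x \<otimes> inv (s (pr x))"
    have m1: "m1 \<in> M" using ms_M x m1_def by simp
    have xd: "x = m1 \<otimes> s (pr x)" using x_decomp x m1_def by simp
    have sc: "s (pr x) \<in> carrier H" using s_car prc x by blast
    have A: "\<alpha> m1 \<in> M" "\<psi> (pr x) \<in> M" using \<alpha>M m1 \<psi>M prc x by auto
    have "a x \<otimes> inv x = \<alpha> m1 \<otimes> \<psi> (pr x) \<otimes> s (pr x) \<otimes> inv (m1 \<otimes> s (pr x))"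
      unfolding a_def m1_def[symmetric] using xd by simp
    also have "\<dots> = \<alpha> m1 \<otimes> \<psi> (pr x) \<otimes> inv m1"
      using A sc m1 M_car by (simp add: m_assoc inv_mult_group inv_cancel2)
    finally have "a x \<otimes> inv x \<in> M" using A m1 M_mult M_inv by simp
    then show ?thesis using coset_eqI[OF x a_car[OF x]] by simp
  qed
  have inj\<alpha>: "inj_on \<alpha> M" using bij bij_betw_def by blast
  have a_inj: "inj_on a (carrier H)"
  proof (rule inj_onI)
    fix x y assume x: "x \<in> carrier H" and y: "y \<in> carrier H" and eq: "a x = a y"
    have p: "pr x = pr y" using a_pr x y eq by metis
    define g where "g = pr x"
    have g: "g \<in> carrier G" using g_def x by simp
    define m1 where "m1 = x \<otimes> inv (s g)"
    define m2 where "m2 = y \<otimes> inv (s g)"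
    have m1: "m1 \<in> M" using ms_M[OF x] m1_def g_def by simp
    have m2: "m2 \<in> M" using ms_M[OF y] m2_def g_def p by simp
    have "\<alpha> m1 \<otimes> \<psi> g \<otimes> s g = \<alpha> m2 \<otimes> \<psi> g \<otimes> s g"
      using eq unfolding a_def m1_def m2_def g_def using p by simp
    then have "\<alpha> m1 = \<alpha> m2" using \<alpha>M m1 m2 \<psi>M g s_car M_car by simp
    then have "m1 = m2" using inj\<alpha> m1 m2 inj_on_def by metis
    then show "x = y" using x_decomp x y m1_def m2_def g_def p by metis
  qed
  have a_surj: "a ` carrier H = carrier H"
  proof
    show "a ` carrier H \<subseteq> carrier H" using a_car by blast
    show "carrier H \<subseteq> a ` carrier H"
    proof
      fix y assume y: "y \<in> carrier H"
      define g where "g = pr y"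
      have g: "g \<in> carrier G" using g_def y by simp
      define n where "n = y \<otimes> inv (s g)"
      have n: "n \<in> M" using ms_M y n_def g_def by simp
      have "n \<otimes> inv (\<psi> g) \<in> M" using n \<psi>M g M_mult M_inv by blast
      then obtain m where m: "m \<in> M" "\<alpha> m = n \<otimes> inv (\<psi> g)"
        using bij bij_betw_imp_surj_on by (metis imageE)
      define x where "x = m \<otimes> s g"
      have x: "x \<in> carrier H" using x_def m M_car s_car g by simp
      have px: "pr x = g" using pr_Ms m g x_def by simp
      have "x \<otimes> inv (s g) = m" using x_def m M_car s_car g by (simp add: m_assoc)
      then have "a x = n \<otimes> inv (\<psi> g) \<otimes> \<psi> g \<otimes> s g" unfolding a_def using px m by simp
      also have "\<dots> = y" using n_def n \<psi>M g M_car s_car y by (simp add: m_assoc)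
      finally show "y \<in> a ` carrier H" using x by blast
    qed
  qed
  have "a \<in> iso H H" unfolding iso_def bij_betw_def using a_hom a_inj a_surj by blast
  then have "a \<in> W" unfolding W_def using aM a_coset by blast
  then show ?thesis using a_on_M by blast
qed

end


context absext_eps begin

definition eW :: "('a \<Rightarrow> 'a) set" where
  "eW = (\<lambda>a. restrict a M) ` W"

definition Wq :: "nat \<Rightarrow> ('a \<Rightarrow> 'a) set" where
  "Wq p = {b \<in> eW. \<forall>q\<in>P. q \<noteq> p \<longrightarrow> (\<forall>m\<in>Syl q. b m = m)}"

definition Cq :: "nat \<Rightarrow> ('a \<Rightarrow> 'a) set" where
  "Cq p = {c \<in> Aut (H\<lparr>carrier := Syl p\<rparr>). \<forall>g\<in>carrier G. \<forall>m\<in>Syl p. c (act g m) = act g (c m)}"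

definition coh :: "nat \<Rightarrow> ('g \<Rightarrow> 'g \<Rightarrow> 'a) \<Rightarrow> ('g \<Rightarrow> 'g \<Rightarrow> 'a) \<Rightarrow> bool" where
  "coh p d d' = (\<exists>phi. (\<forall>g\<in>carrier G. phi g \<in> Syl p) \<and>
     (\<forall>g\<in>carrier G. \<forall>h\<in>carrier G.
        d g h = d' g h \<otimes> act g (phi h) \<otimes> inv (phi (g \<otimes>\<^bsub>G\<^esub> h)) \<otimes> phi g))"

definition Stab :: "nat \<Rightarrow> ('a \<Rightarrow> 'a) set" where
  "Stab p = {c \<in> Cq p. coh p (\<lambda>g h. c (epsp p g h)) (epsp p)}"

lemma Syl_sub_M: "Syl p \<subseteq> M" using Syl_M by blast

lemma act_Syl: assumes "p \<in> P" "g \<in> carrier G" "m \<in> Syl p" shows "act g m \<in> Syl p"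
proof -
  have m: "m \<in> M" "m [^] p = \<one>" using Syl_iff assms by auto
  have "act g m [^] p = \<one>" using act_pow[OF assms(2) m(1), of p] m act_one assms by simp
  then show ?thesis using Syl_iff[OF assms(1)] act_M[OF assms(2) m(1)] by blast
qed

lemma W_pow: "a \<in> W \<Longrightarrow> x \<in> carrier H \<Longrightarrow> a (x [^] (n::nat)) = a x [^] n"
  using group_hom.hom_nat_pow[OF W_ghom] by blast

lemma W_one: "a \<in> W \<Longrightarrow> a \<one> = \<one>"
  using group_hom.hom_one[OF W_ghom] by blast

lemma W_Syl: assumes "a \<in> W" "p \<in> P" "m \<in> Syl p" shows "a m \<in> Syl p"
proof -
  have m: "m \<in> M" "m [^] p = \<one>" using Syl_iff assms by auto
  have "a m [^] p = \<one>" using W_pow[OF assms(1) M_car[OF m(1)], of p] m W_one[OF assms(1)] by simp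
  then show ?thesis using Syl_iff[OF assms(2)] W_M[OF assms(1) m(1)] by blast
qed

lemma W_proj: "a \<in> W \<Longrightarrow> m \<in> M \<Longrightarrow> a (proj p m) = proj p (a m)"
  unfolding proj_def using W_pow M_car by blast

lemma restrictW_hom: assumes "a \<in> W" shows "restrict a M \<in> hom MG MG"
proof (rule homI)
  fix x y assume "x \<in> carrier MG" "y \<in> carrier MG"
  then have xy: "x \<in> M" "y \<in> M" by auto
  then show "restrict a M (x \<otimes>\<^bsub>MG\<^esub> y) = restrict a M x \<otimes>\<^bsub>MG\<^esub> restrict a M y"
    using M_mult hom_mult[OF W_hom[OF assms]] M_car by simp
qed (use W_M assms in auto)

lemma W_bijM: assumes "a \<in> W" shows "bij_betw a M M"
proof -
  have "inj_on a M" using inj_on_subset[OF W_inj[OF assms]] M_car by blast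
  then show ?thesis unfolding bij_betw_def using assms W_def by blast
qed

lemma restrictW_Aut: assumes "a \<in> W" shows "restrict a M \<in> Aut MG"
proof -
  have "bij_betw (restrict a M) M M"
    using W_bijM[OF assms] bij_betw_cong[of M "restrict a M" a M] by simp
  then show ?thesis unfolding Aut_def iso_def using restrictW_hom[OF assms] by simp
qed

lemma eW_hom: "\<alpha> \<in> eW \<Longrightarrow> \<alpha> \<in> hom MG MG"
  unfolding eW_def using restrictW_hom by blast

lemma eW_Aut: "\<alpha> \<in> eW \<Longrightarrow> \<alpha> \<in> Aut MG"
  unfolding eW_def using restrictW_Aut by blast

lemma Syl_grp: "p \<in> P \<Longrightarrow> group (H\<lparr>carrier := Syl p\<rparr>)"
  using subgroup_imp_group[OF Syl_sub] by blast

lemma L1: assumes "\<alpha> \<in> eW" "p \<in> P" shows "restrict \<alpha> (Syl p) \<in> Stab p"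
proof -
  obtain a where a: "a \<in> W" and \<alpha>: "\<alpha> = restrict a M" using assms unfolding eW_def by blast
  have ca: "restrict \<alpha> (Syl p) = restrict a (Syl p)" using \<alpha> Syl_sub_M by (auto simp: restrict_def fun_eq_iff)
  let ?c = "restrict a (Syl p)"
  have hom: "?c \<in> hom (H\<lparr>carrier := Syl p\<rparr>) (H\<lparr>carrier := Syl p\<rparr>)"
  proof (rule homI)
    fix x y assume "x \<in> carrier (H\<lparr>carrier := Syl p\<rparr>)" "y \<in> carrier (H\<lparr>carrier := Syl p\<rparr>)"
    then have xy: "x \<in> Syl p" "y \<in> Syl p" by auto
    have "x \<otimes> y \<in> Syl p" using subgroup.m_closed[OF Syl_sub[OF assms(2)] xy] .
    then show "?c (x \<otimes>\<^bsub>H\<lparr>carrier := Syl p\<rparr>\<^esub> y) = ?c x \<otimes>\<^bsub>H\<lparr>carrier := Syl p\<rparr>\<^esub> ?c y"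
      using xy hom_mult[OF W_hom[OF a]] Syl_M M_car by simp
  qed (use W_Syl a assms in auto)
  have inj: "inj_on ?c (Syl p)"
    using inj_on_subset[OF W_inj[OF a]] Syl_M M_car by (auto simp: inj_on_def)
  have surj: "?c ` Syl p = Syl p"
  proof
    show "?c ` Syl p \<subseteq> Syl p" using W_Syl a assms by auto
    show "Syl p \<subseteq> ?c ` Syl p"
    proof
      fix n assume n: "n \<in> Syl p"
      then have "n \<in> a ` M" using Syl_M a W_def by blast
      then obtain x where x: "x \<in> M" "n = a x" by blast
      have "a (x [^] p) = \<one>" using W_pow[OF a M_car[OF x(1)]] x n Syl_iff assms by simp
      then have "a (x [^] p) = a \<one>" using W_one[OF a] by simp
      then have "x [^] p = \<one>" using inj_onD[OF W_inj[OF a]] x M_car by simp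
      then have "x \<in> Syl p" using Syl_iff assms x by blast
      then show "n \<in> ?c ` Syl p" using x by force
    qed
  qed
  have aut: "?c \<in> Aut (H\<lparr>carrier := Syl p\<rparr>)"
    unfolding Aut_def iso_def bij_betw_def using hom inj surj by simp
  have cq: "?c \<in> Cq p" unfolding Cq_def using aut W_act[OF a] act_Syl[OF assms(2)] Syl_M by auto
  obtain \<psi> where \<psi>: "cocyc a \<psi>" using W_cocycle[OF a] by blast
  have \<psi>M: "\<psi> g \<in> M" if "g \<in> carrier G" for g using \<psi> that unfolding cocyc_def by blast
  define phi where "phi g = proj p (\<psi> g)" for g
  have "coh p (\<lambda>g h. ?c (epsp p g h)) (epsp p)"
    unfolding coh_def
  proof (intro exI conjI ballI)
    fix g assume "g \<in> carrier G" then show "phi g \<in> Syl p" unfolding phi_def using proj_Syl assms \<psi>M by blast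
  next
    fix g h assume g: "g \<in> carrier G" and h: "h \<in> carrier G"
    have gh: "g \<otimes>\<^bsub>G\<^esub> h \<in> carrier G" using g h by simp
    have e: "eps g h \<in> M" using eps_M g h by blast
    note cM = \<psi>M[OF g] \<psi>M[OF h] \<psi>M[OF gh]
    have ac: "act g (\<psi> h) \<in> M" using act_M g cM by blast
    have "?c (epsp p g h) = a (proj p (eps g h))" using epsp_Syl assms g h proj_eps by simp
    also have "\<dots> = proj p (a (eps g h))" using W_proj a e by blast
    also have "a (eps g h) = eps g h \<otimes> act g (\<psi> h) \<otimes> inv (\<psi> (g \<otimes>\<^bsub>G\<^esub> h)) \<otimes> \<psi> g"
      using \<psi> g h unfolding cocyc_def by blast
    also have "proj p \<dots> = proj p (eps g h) \<otimes> proj p (act g (\<psi> h)) \<otimes> proj p (inv (\<psi> (g \<otimes>\<^bsub>G\<^esub> h))) \<otimes> proj p (\<psi> g)"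
      using e ac cM M_inv M_mult proj_mult by simp
    also have "\<dots> = epsp p g h \<otimes> act g (phi h) \<otimes> inv (phi (g \<otimes>\<^bsub>G\<^esub> h)) \<otimes> phi g"
      unfolding phi_def using proj_eps[OF assms(2) g h] proj_act[OF g] proj_inv cM by simp
    finally show "?c (epsp p g h) = epsp p g h \<otimes> act g (phi h) \<otimes> inv (phi (g \<otimes>\<^bsub>G\<^esub> h)) \<otimes> phi g" .
  qed
  then show ?thesis unfolding Stab_def using cq ca by simp
qed

end


context absext_eps begin

lemma Mconj: "x \<in> M \<Longrightarrow> y \<in> M \<Longrightarrow> x \<otimes> y \<otimes> inv x = y"
  using Mcomm[of x y] M_car by (simp add: m_assoc)

lemma L2: assumes c: "c \<in> Stab p" and p: "p \<in> P" shows "\<exists>b\<in>Wq p. restrict b (Syl p) = c"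
proof -
  let ?S = "H\<lparr>carrier := Syl p\<rparr>"
  have caut: "c \<in> Aut ?S" and ccomm: "\<And>g m. g \<in> carrier G \<Longrightarrow> m \<in> Syl p \<Longrightarrow> c (act g m) = act g (c m)"
    and ccoh: "coh p (\<lambda>g h. c (epsp p g h)) (epsp p)"
    using c unfolding Stab_def Cq_def by auto
  have chom: "c \<in> hom ?S ?S" and cbij: "bij_betw c (Syl p) (Syl p)" and cext: "c \<in> extensional (Syl p)"
    using caut unfolding Aut_def iso_def by auto
  have cS: "c m \<in> Syl p" if "m \<in> Syl p" for m using hom_in_carrier[OF chom, of m] that by simp
  have cmult: "c (x \<otimes> y) = c x \<otimes> c y" if "x \<in> Syl p" "y \<in> Syl p" for x y
    using hom_mult[OF chom, of x y] that by simp
  have cone: "c \<one> = \<one>" using hom_one[OF chom Syl_grp[OF p] Syl_grp[OF p]] by simp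
  have cinj: "inj_on c (Syl p)" using cbij bij_betw_def by blast
  have csurj: "c ` Syl p = Syl p" using bij_betw_imp_surj_on[OF cbij] .
  have SM: "x \<in> Syl p \<Longrightarrow> x \<in> M" for x using Syl_M by blast
  have pS: "proj p m \<in> Syl p" if "m \<in> M" for m using proj_Syl p that by blast
  have pp: "proj p m = m" if "m \<in> Syl p" for m using proj_on_Syl[OF p p that] by simp
  define \<alpha> where "\<alpha> m = c (proj p m) \<otimes> m \<otimes> inv (proj p m)" for m
  have \<alpha>M: "\<alpha> m \<in> M" if m: "m \<in> M" for m
    unfolding \<alpha>_def using SM[OF cS[OF pS[OF m]]] m SM[OF pS[OF m]] M_mult M_inv by blast
  have proj\<alpha>: "proj p (\<alpha> m) = c (proj p m)" if m: "m \<in> M" for m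
  proof -
    have a1: "c (proj p m) \<in> M" "proj p m \<in> M" using SM cS pS m by auto
    have "proj p (\<alpha> m) = proj p (c (proj p m)) \<otimes> proj p m \<otimes> proj p (inv (proj p m))"
      unfolding \<alpha>_def using a1 m M_mult M_inv proj_mult by simp
    also have "\<dots> = c (proj p m) \<otimes> proj p m \<otimes> inv (proj p m)"
      using pp[OF cS[OF pS[OF m]]] proj_inv[OF a1(2)] pp[OF pS[OF m]] by simp
    also have "\<dots> = c (proj p m)" using a1 M_car by (simp add: m_assoc)
    finally show ?thesis .
  qed
  have \<alpha>hom: "\<alpha> \<in> hom MG MG"
  proof (rule homI)
    fix x y assume "x \<in> carrier MG" "y \<in> carrier MG"
    then have xy: "x \<in> M" "y \<in> M" by auto
    have f: "c (proj p x) \<in> M" "c (proj p y) \<in> M" "proj p x \<in> M" "proj p y \<in> M"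
      using SM cS pS xy by auto
    have "\<alpha> (x \<otimes> y) = c (proj p x) \<otimes> c (proj p y) \<otimes> (x \<otimes> y) \<otimes> (inv (proj p y) \<otimes> inv (proj p x))"
      unfolding \<alpha>_def using proj_mult xy cmult pS f M_car by (simp add: inv_mult_group)
    also have "\<dots> = \<alpha> x \<otimes> \<alpha> y"
      unfolding \<alpha>_def using f xy M_inv M_car by (simp add: M_ac)
    finally show "\<alpha> (x \<otimes>\<^bsub>MG\<^esub> y) = \<alpha> x \<otimes>\<^bsub>MG\<^esub> \<alpha> y" by simp
  qed (use \<alpha>M in auto)
  have \<alpha>inj: "inj_on \<alpha> M"
  proof (rule inj_onI)
    fix x y assume x: "x \<in> M" and y: "y \<in> M" and eq: "\<alpha> x = \<alpha> y"
    have "c (proj p x) = c (proj p y)" using proj\<alpha>[OF x] proj\<alpha>[OF y] eq by simp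
    then have pxy: "proj p x = proj p y" using inj_onD[OF cinj] pS x y by blast
    have f: "c (proj p x) \<in> M" "proj p x \<in> M" using SM cS pS x by auto
    have "c (proj p x) \<otimes> x \<otimes> inv (proj p x) = c (proj p x) \<otimes> y \<otimes> inv (proj p x)"
      using eq pxy unfolding \<alpha>_def by simp
    then show "x = y" using f x y M_car M_inv by simp
  qed
  have \<alpha>surj: "\<alpha> ` M = M"
  proof
    show "\<alpha> ` M \<subseteq> M" using \<alpha>M by blast
    show "M \<subseteq> \<alpha> ` M"
    proof
      fix n assume n: "n \<in> M"
      define q where "q = proj p n"
      have q: "q \<in> Syl p" using pS n q_def by simp
      then have "q \<in> c ` Syl p" using csurj by simp
      then obtain u where u: "u \<in> Syl p" "c u = q" by blast
      define m where "m = u \<otimes> n \<otimes> inv q"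
      have m: "m \<in> M" unfolding m_def using SM u q n M_mult M_inv by blast
      have "proj p m = proj p u \<otimes> proj p n \<otimes> proj p (inv q)"
        unfolding m_def using SM u q n M_mult M_inv proj_mult by simp
      also have "\<dots> = u \<otimes> q \<otimes> inv q" using pp u q q_def proj_inv SM by simp
      also have "\<dots> = u" using SM u q M_car by (simp add: m_assoc)
      finally have pm: "proj p m = u" .
      have "\<alpha> m = c u \<otimes> m \<otimes> inv u" unfolding \<alpha>_def pm ..
      also have "\<dots> = q \<otimes> (u \<otimes> n \<otimes> inv q) \<otimes> inv u" using u(2) m_def by simp
      also have "\<dots> = q \<otimes> (inv q \<otimes> (u \<otimes> n)) \<otimes> inv u"
        using Mcomm[of "u \<otimes> n" "inv q"] SM u q n M_mult M_inv by simp
      also have "\<dots> = u \<otimes> n \<otimes> inv u" using SM u q n M_car by (simp add: inv_cancel2)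
      also have "\<dots> = n" using Mconj SM u n by blast
      finally show "n \<in> \<alpha> ` M" using m by force
    qed
  qed
  have \<alpha>bij: "bij_betw \<alpha> M M" unfolding bij_betw_def using \<alpha>inj \<alpha>surj by blast
  have \<alpha>comm: "\<alpha> (act g m) = act g (\<alpha> m)" if g: "g \<in> carrier G" and m: "m \<in> M" for g m
  proof -
    have f: "proj p m \<in> Syl p" "c (proj p m) \<in> Syl p" using pS cS m by auto
    have "\<alpha> (act g m) = c (act g (proj p m)) \<otimes> act g m \<otimes> inv (act g (proj p m))"
      unfolding \<alpha>_def using proj_act g m by simp
    also have "\<dots> = act g (c (proj p m)) \<otimes> act g m \<otimes> act g (inv (proj p m))"
      using ccomm g f act_inv SM by simp
    also have "\<dots> = act g (\<alpha> m)"
      unfolding \<alpha>_def using act_mult g f SM m M_mult M_inv by simp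
    finally show ?thesis .
  qed
  obtain phi where phiS: "\<And>g. g \<in> carrier G \<Longrightarrow> phi g \<in> Syl p"
    and phiE: "\<And>g h. g \<in> carrier G \<Longrightarrow> h \<in> carrier G \<Longrightarrow>
        c (epsp p g h) = epsp p g h \<otimes> act g (phi h) \<otimes> inv (phi (g \<otimes>\<^bsub>G\<^esub> h)) \<otimes> phi g"
    using ccoh unfolding coh_def by blast
  have coc: "cocyc \<alpha> phi" unfolding cocyc_def
  proof (intro conjI ballI)
    fix g assume "g \<in> carrier G" then show "phi g \<in> M" using phiS SM by blast
  next
    fix g h assume g: "g \<in> carrier G" and h: "h \<in> carrier G"
    have gh: "g \<otimes>\<^bsub>G\<^esub> h \<in> carrier G" using g h by simp
    have e: "eps g h \<in> M" using eps_M g h by blast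
    have ep: "epsp p g h \<in> M" using epsp_Syl p g h SM by blast
    have A: "act g (phi h) \<in> M" using act_M g phiS h SM by blast
    have B: "inv (phi (g \<otimes>\<^bsub>G\<^esub> h)) \<in> M" using phiS gh SM M_inv by blast
    have C: "phi g \<in> M" using phiS g SM by blast
    have "\<alpha> (eps g h) = c (epsp p g h) \<otimes> eps g h \<otimes> inv (epsp p g h)"
      unfolding \<alpha>_def using proj_eps p g h by simp
    also have "\<dots> = epsp p g h \<otimes> (act g (phi h) \<otimes> inv (phi (g \<otimes>\<^bsub>G\<^esub> h)) \<otimes> phi g \<otimes> eps g h) \<otimes> inv (epsp p g h)"
      using phiE g h e ep A B C M_car by (simp add: m_assoc)
    also have "\<dots> = act g (phi h) \<otimes> inv (phi (g \<otimes>\<^bsub>G\<^esub> h)) \<otimes> phi g \<otimes> eps g h"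
      using Mconj ep A B C e M_mult by simp
    also have "\<dots> = eps g h \<otimes> act g (phi h) \<otimes> inv (phi (g \<otimes>\<^bsub>G\<^esub> h)) \<otimes> phi g"
      using A B C e M_car by (simp add: M_ac)
    finally show "\<alpha> (eps g h) = eps g h \<otimes> act g (phi h) \<otimes> inv (phi (g \<otimes>\<^bsub>G\<^esub> h)) \<otimes> phi g" .
  qed
  obtain a where a: "a \<in> W" and aM: "\<And>m. m \<in> M \<Longrightarrow> a m = \<alpha> m"
    using construct[OF \<alpha>hom \<alpha>bij \<alpha>comm coc] by blast
  define b where "b = restrict a M"
  have beW: "b \<in> eW" unfolding eW_def b_def using a by blast
  have bWq: "b \<in> Wq p" unfolding Wq_def
  proof (intro CollectI conjI ballI impI beW)
    fix q m assume q: "q \<in> P" "q \<noteq> p" and m: "m \<in> Syl q"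
    have mM: "m \<in> M" using m Syl_M by blast
    have "proj p m = \<one>" using proj_on_Syl[OF q(1) p m] q by simp
    then show "b m = m" unfolding b_def using aM mM cone M_car by (simp add: \<alpha>_def)
  qed
  have "restrict b (Syl p) = c"
  proof
    fix m show "restrict b (Syl p) m = c m"
    proof (cases "m \<in> Syl p")
      case True
      then have mM: "m \<in> M" using Syl_M by blast
      have "b m = c m \<otimes> m \<otimes> inv m" unfolding b_def using aM mM pp True by (simp add: \<alpha>_def)
      also have "\<dots> = c m" using SM cS True M_car by (simp add: m_assoc)
      finally show ?thesis using True by simp
    next
      case False then show ?thesis using cext by (simp add: extensional_def)
    qed
  qed
  then show ?thesis using bWq by blast
qed

end


context absext_eps begin

lemma id_W: "(\<lambda>x. x) \<in> W"
  unfolding W_def using iso_set_refl by simp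

lemma comp_W: assumes "a \<in> W" "b \<in> W" shows "b \<circ> a \<in> W"
proof -
  have ia: "a \<in> iso H H" and ib: "b \<in> iso H H" using assms unfolding W_def by auto
  have "b \<circ> a \<in> iso H H" using iso_set_trans[OF ia ib] .
  moreover have "(b \<circ> a) ` M = M"
  proof -
    have "(b \<circ> a) ` M = b ` (a ` M)" by (rule image_comp[symmetric])
    also have "a ` M = M" using assms(1) unfolding W_def by blast
    also have "b ` M = M" using assms(2) unfolding W_def by blast
    finally show ?thesis .
  qed
  moreover have "M #> (b \<circ> a) x = M #> x" if x: "x \<in> carrier H" for x
  proof -
    have ax: "a x \<in> carrier H" using W_car[OF assms(1) x] .
    have "M #> b (a x) = M #> a x" using assms(2) ax unfolding W_def by blast
    also have "\<dots> = M #> x" using assms(1) x unfolding W_def by blast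
    finally show ?thesis by simp
  qed
  ultimately show ?thesis unfolding W_def by blast
qed

lemma eW_comp: assumes "\<beta> \<in> eW" "\<gamma> \<in> eW" shows "restrict (\<beta> \<circ> \<gamma>) M \<in> eW"
proof -
  obtain b c where b: "b \<in> W" "\<beta> = restrict b M" and c: "c \<in> W" "\<gamma> = restrict c M"
    using assms unfolding eW_def by blast
  have "restrict (\<beta> \<circ> \<gamma>) M = restrict (b \<circ> c) M"
    using b c W_M by (auto simp: fun_eq_iff restrict_def)
  then show ?thesis unfolding eW_def using comp_W[OF c(1) b(1)] by blast
qed

lemma Aut_MG_Syl: assumes "a \<in> Aut MG" "q \<in> P" "m \<in> Syl q" shows "a m \<in> Syl q"
proof -
  have ah: "a \<in> hom MG MG" using assms unfolding Aut_def iso_def by blast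
  have m: "m \<in> M" "m [^] q = \<one>" using Syl_iff assms by auto
  have am: "a m \<in> M" using hom_in_carrier[OF ah, of m] m by simp
  have "a (m [^]\<^bsub>MG\<^esub> q) = a m [^]\<^bsub>MG\<^esub> q"
    using hom_nat_pow[OF ah _ MG.is_group MG.is_group, of m q] m by simp
  then have "a m [^] q = a \<one>" using m by (simp add: nat_pow_consistent[symmetric])
  also have "a \<one> = \<one>" using hom_one[OF ah MG.is_group MG.is_group] by simp
  finally show ?thesis using Syl_iff[OF assms(2)] am by blast
qed

lemma partA_sup:
  assumes a: "a \<in> Aut MG" and bs: "\<forall>p\<in>P. \<exists>b\<in>Wq p. \<forall>m\<in>Syl p. a m = b m"
  shows "a \<in> eW"
proof -
  obtain bsel where bsel: "\<And>p. p \<in> P \<Longrightarrow> bsel p \<in> Wq p \<and> (\<forall>m\<in>Syl p. a m = bsel p m)"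
    using bs by metis
  have main: "S \<subseteq> P \<Longrightarrow> \<exists>\<gamma>\<in>eW. (\<forall>q\<in>S. \<forall>m\<in>Syl q. \<gamma> m = a m) \<and> (\<forall>q\<in>P - S. \<forall>m\<in>Syl q. \<gamma> m = m)"
    if "finite S" for S
    using that
  proof (induction S rule: finite_induct)
    case empty
    have "restrict (\<lambda>x. x) M \<in> eW" unfolding eW_def using id_W by blast
    moreover have "\<forall>q\<in>P - {}. \<forall>m\<in>Syl q. restrict (\<lambda>x. x) M m = m" using Syl_M by simp
    ultimately show ?case by blast
  next
    case (insert p S)
    then obtain \<gamma> where g: "\<gamma> \<in> eW" "\<forall>q\<in>S. \<forall>m\<in>Syl q. \<gamma> m = a m" "\<forall>q\<in>P - S. \<forall>m\<in>Syl q. \<gamma> m = m"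
      by blast
    have p: "p \<in> P" using insert by blast
    have b: "bsel p \<in> Wq p" "\<forall>m\<in>Syl p. a m = bsel p m" using bsel p by auto
    have beW: "bsel p \<in> eW" using b Wq_def by blast
    have bfix: "\<And>q m. q \<in> P \<Longrightarrow> q \<noteq> p \<Longrightarrow> m \<in> Syl q \<Longrightarrow> bsel p m = m" using b(1) unfolding Wq_def by blast
    define \<gamma>' where "\<gamma>' = restrict (bsel p \<circ> \<gamma>) M"
    have "\<gamma>' \<in> eW" unfolding \<gamma>'_def using eW_comp[OF beW g(1)] .
    moreover have "\<forall>q\<in>insert p S. \<forall>m\<in>Syl q. \<gamma>' m = a m"
    proof (intro ballI)
      fix q m assume q: "q \<in> insert p S" and m: "m \<in> Syl q"
      have mM: "m \<in> M" using m Syl_M by blast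
      show "\<gamma>' m = a m"
      proof (cases "q = p")
        case True
        then have "\<gamma> m = m" using g(3) insert m p by blast
        then show ?thesis unfolding \<gamma>'_def using mM b(2) m True by simp
      next
        case False
        then have qS: "q \<in> S" "q \<in> P" using q insert by auto
        then have "\<gamma> m = a m" using g(2) m by blast
        moreover have "a m \<in> Syl q" using Aut_MG_Syl[OF a qS(2) m] .
        ultimately show ?thesis unfolding \<gamma>'_def using mM bfix[OF qS(2) False] by simp
      qed
    qed
    moreover have "\<forall>q\<in>P - insert p S. \<forall>m\<in>Syl q. \<gamma>' m = m"
    proof (intro ballI)
      fix q m assume q: "q \<in> P - insert p S" and m: "m \<in> Syl q"
      have mM: "m \<in> M" using m Syl_M by blast
      have "\<gamma> m = m" using g(3) q m by blast
      moreover have "bsel p m = m" using bfix[of q m] q m by blast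
      ultimately show "\<gamma>' m = m" unfolding \<gamma>'_def using mM by simp
    qed
    ultimately show ?case by blast
  qed
  obtain \<gamma> where g: "\<gamma> \<in> eW" "\<forall>q\<in>P. \<forall>m\<in>Syl q. \<gamma> m = a m"
    using main[OF Pfin] by blast
  have ah: "a \<in> hom MG MG" and aext: "a \<in> extensional M" using a unfolding Aut_def iso_def by auto
  have gh: "\<gamma> \<in> hom MG MG" and gext: "\<gamma> \<in> extensional M"
    using eW_Aut[OF g(1)] unfolding Aut_def iso_def by auto
  have "a = \<gamma>"
  proof
    fix m show "a m = \<gamma> m"
    proof (cases "m \<in> M")
      case True then show ?thesis using hom_eq_on_Syl[OF ah gh] g(2) by metis
    next
      case False then show ?thesis using aext gext by (simp add: extensional_def)
    qed
  qed
  then show ?thesis using g(1) by simp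
qed

theorem abstract_main:
  "eW = {a \<in> Aut MG. \<forall>p\<in>P. \<exists>b\<in>Wq p. \<forall>m\<in>Syl p. a m = b m}
   \<and> (\<forall>p\<in>P. (\<lambda>b. restrict b (Syl p)) ` Wq p = Stab p)"
proof
  show "eW = {a \<in> Aut MG. \<forall>p\<in>P. \<exists>b\<in>Wq p. \<forall>m\<in>Syl p. a m = b m}"
  proof
    show "eW \<subseteq> {a \<in> Aut MG. \<forall>p\<in>P. \<exists>b\<in>Wq p. \<forall>m\<in>Syl p. a m = b m}"
    proof
      fix \<alpha> assume al: "\<alpha> \<in> eW"
      have "\<exists>b\<in>Wq p. \<forall>m\<in>Syl p. \<alpha> m = b m" if p: "p \<in> P" for p
      proof -
        obtain b where b: "b \<in> Wq p" "restrict b (Syl p) = restrict \<alpha> (Syl p)"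
          using L2[OF L1[OF al p] p] by blast
        have "\<forall>m\<in>Syl p. \<alpha> m = b m"
        proof
          fix m assume "m \<in> Syl p"
          then show "\<alpha> m = b m" using fun_cong[OF b(2), of m] by simp
        qed
        then show ?thesis using b(1) by blast
      qed
      then show "\<alpha> \<in> {a \<in> Aut MG. \<forall>p\<in>P. \<exists>b\<in>Wq p. \<forall>m\<in>Syl p. a m = b m}"
        using eW_Aut[OF al] by blast
    qed
    show "{a \<in> Aut MG. \<forall>p\<in>P. \<exists>b\<in>Wq p. \<forall>m\<in>Syl p. a m = b m} \<subseteq> eW"
      using partA_sup by blast
  qed
  show "\<forall>p\<in>P. (\<lambda>b. restrict b (Syl p)) ` Wq p = Stab p"
  proof
    fix p assume p: "p \<in> P"
    show "(\<lambda>b. restrict b (Syl p)) ` Wq p = Stab p"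
    proof
      show "(\<lambda>b. restrict b (Syl p)) ` Wq p \<subseteq> Stab p"
        using L1 p unfolding Wq_def by blast
      show "Stab p \<subseteq> (\<lambda>b. restrict b (Syl p)) ` Wq p"
        using L2 p by (metis image_eqI subsetI)
    qed
  qed
qed

end


locale conc = group F for F :: "'f monoid" (structure) +
  fixes G :: "'g monoid" and mu :: "'f \<Rightarrow> 'g"
  assumes grpG: "group G" and muhom: "mu \<in> hom F G" and musurj: "mu ` carrier F = carrier G"
    and finG: "finite (carrier G)"
begin

sublocale G: group G by (rule grpG)
sublocale muh: group_hom F G mu
  by (rule group_hom.intro[OF is_group grpG]) (simp add: group_hom_axioms_def muhom)

abbreviation "R \<equiv> Rsub F G mu"
abbreviation "L \<equiv> Lsub F G mu"
abbreviation "N \<equiv> Nsub F G mu"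
abbreviation "C \<equiv> comm_sub F R L"
abbreviation "Pw \<equiv> generate F {x [^] k_of G | x. x \<in> R}"

lemma R_normal: "R \<lhd> F"
  unfolding Rsub_def by (rule muh.normal_kernel)

lemma R_car: "x \<in> R \<Longrightarrow> x \<in> carrier F" unfolding Rsub_def kernel_def by simp
lemma R_mu: "x \<in> R \<Longrightarrow> mu x = \<one>\<^bsub>G\<^esub>" unfolding Rsub_def kernel_def by simp
lemma R_iff: "x \<in> carrier F \<Longrightarrow> x \<in> R \<longleftrightarrow> mu x = \<one>\<^bsub>G\<^esub>" unfolding Rsub_def kernel_def by simp

lemma fitting_normal: "fitting G \<lhd> G"
  unfolding fitting_def
proof (rule G.normal_generateI)
  show "\<Union>{N. N \<lhd> G \<and> nilpotent_group (G\<lparr>carrier := N\<rparr>)} \<subseteq> carrier G"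
    using normal_imp_subgroup subgroup.subset by blast
  fix h g assume h: "h \<in> \<Union>{N. N \<lhd> G \<and> nilpotent_group (G\<lparr>carrier := N\<rparr>)}" and g: "g \<in> carrier G"
  then obtain K where K: "K \<lhd> G" "nilpotent_group (G\<lparr>carrier := K\<rparr>)" "h \<in> K" by blast
  then have "g \<otimes>\<^bsub>G\<^esub> h \<otimes>\<^bsub>G\<^esub> inv\<^bsub>G\<^esub> g \<in> K" using normal.inv_op_closed2[OF K(1) g K(3)] by simp
  then show "g \<otimes>\<^bsub>G\<^esub> h \<otimes>\<^bsub>G\<^esub> inv\<^bsub>G\<^esub> g \<in> \<Union>{N. N \<lhd> G \<and> nilpotent_group (G\<lparr>carrier := N\<rparr>)}"
    using K by blast
qed

lemma L_car: "x \<in> L \<Longrightarrow> x \<in> carrier F" unfolding Lsub_def by simp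

lemma R_L: "x \<in> R \<Longrightarrow> x \<in> L"
  unfolding Lsub_def using R_car R_mu subgroup.one_closed[OF normal_imp_subgroup[OF fitting_normal]] by simp

lemma L_conj: assumes "g \<in> carrier F" "k \<in> L" shows "g \<otimes> k \<otimes> inv g \<in> L"
proof -
  have k: "k \<in> carrier F" "mu k \<in> fitting G" using assms unfolding Lsub_def by auto
  have "mu (g \<otimes> k \<otimes> inv g) = mu g \<otimes>\<^bsub>G\<^esub> mu k \<otimes>\<^bsub>G\<^esub> inv\<^bsub>G\<^esub> mu g" using assms k by simp
  also have "\<dots> \<in> fitting G" using normal.inv_op_closed2[OF fitting_normal _ k(2)] assms by simp
  finally show ?thesis unfolding Lsub_def using assms k by simp
qed

lemma inv_cancelF: "x \<in> carrier F \<Longrightarrow> z \<in> carrier F \<Longrightarrow> inv x \<otimes> (x \<otimes> z) = z"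
  by (simp add: m_assoc[symmetric])

lemma conj_comm: assumes "g \<in> carrier F" "h \<in> carrier F" "k \<in> carrier F"
  shows "g \<otimes> (inv h \<otimes> inv k \<otimes> h \<otimes> k) \<otimes> inv g =
     inv (g \<otimes> h \<otimes> inv g) \<otimes> inv (g \<otimes> k \<otimes> inv g) \<otimes> (g \<otimes> h \<otimes> inv g) \<otimes> (g \<otimes> k \<otimes> inv g)"
  using assms by (simp add: m_assoc inv_mult_group inv_cancelF)

lemma C_normal: "C \<lhd> F"
  unfolding comm_sub_def
proof (rule normal_generateI)
  show "{inv h \<otimes> inv k \<otimes> h \<otimes> k |h k. h \<in> R \<and> k \<in> L} \<subseteq> carrier F"
    using R_car L_car by auto
  fix x g assume x: "x \<in> {inv h \<otimes> inv k \<otimes> h \<otimes> k |h k. h \<in> R \<and> k \<in> L}" and g: "g \<in> carrier F"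
  then obtain h k where hk: "h \<in> R" "k \<in> L" "x = inv h \<otimes> inv k \<otimes> h \<otimes> k" by blast
  have "g \<otimes> h \<otimes> inv g \<in> R" using normal.inv_op_closed2[OF R_normal g hk(1)] .
  moreover have "g \<otimes> k \<otimes> inv g \<in> L" using L_conj g hk(2) by blast
  moreover have "g \<otimes> x \<otimes> inv g = inv (g \<otimes> h \<otimes> inv g) \<otimes> inv (g \<otimes> k \<otimes> inv g) \<otimes> (g \<otimes> h \<otimes> inv g) \<otimes> (g \<otimes> k \<otimes> inv g)"
    using conj_comm[OF g R_car[OF hk(1)] L_car[OF hk(2)]] hk(3) by simp
  ultimately show "g \<otimes> x \<otimes> inv g \<in> {inv h \<otimes> inv k \<otimes> h \<otimes> k |h k. h \<in> R \<and> k \<in> L}" by blast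
qed

lemma conj_pow: "g \<in> carrier F \<Longrightarrow> x \<in> carrier F \<Longrightarrow> g \<otimes> x [^] (n::nat) \<otimes> inv g = (g \<otimes> x \<otimes> inv g) [^] n"
proof (induction n)
  case 0 then show ?case by simp
next
  case (Suc n)
  have "g \<otimes> x [^] Suc n \<otimes> inv g = (g \<otimes> x [^] n \<otimes> inv g) \<otimes> (g \<otimes> x \<otimes> inv g)"
    using Suc.prems by (simp add: m_assoc inv_cancelF)
  then show ?case using Suc by simp
qed

lemma Pw_normal: "Pw \<lhd> F"
proof (rule normal_generateI)
  show "{x [^] k_of G |x. x \<in> R} \<subseteq> carrier F" using R_car by auto
  fix y g assume y: "y \<in> {x [^] k_of G |x. x \<in> R}" and g: "g \<in> carrier F"
  then obtain x where x: "x \<in> R" "y = x [^] k_of G" by blast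
  have "g \<otimes> x \<otimes> inv g \<in> R" using normal.inv_op_closed2[OF R_normal g x(1)] .
  moreover have "g \<otimes> y \<otimes> inv g = (g \<otimes> x \<otimes> inv g) [^] k_of G" using conj_pow g R_car x by simp
  ultimately show "g \<otimes> y \<otimes> inv g \<in> {x [^] k_of G |x. x \<in> R}" by blast
qed

lemma N_def': "N = C <#> Pw" unfolding Nsub_def by simp

lemma N_normal: "N \<lhd> F"
  unfolding N_def' using normal_subgroup_set_mult_closed[OF C_normal Pw_normal] .

lemma R_sub: "subgroup R F" using normal_imp_subgroup[OF R_normal] .

lemma C_R: "C \<subseteq> R"
  unfolding comm_sub_def
proof (rule generate_subgroup_incl[OF _ R_sub])
  show "{inv h \<otimes> inv k \<otimes> h \<otimes> k |h k. h \<in> R \<and> k \<in> L} \<subseteq> R"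
  proof
    fix x assume "x \<in> {inv h \<otimes> inv k \<otimes> h \<otimes> k |h k. h \<in> R \<and> k \<in> L}"
    then obtain h k where hk: "h \<in> R" "k \<in> L" "x = inv h \<otimes> inv k \<otimes> h \<otimes> k" by blast
    have kc: "k \<in> carrier F" using L_car hk by blast
    have "inv k \<otimes> h \<otimes> k \<in> R" using normal.inv_op_closed1[OF R_normal kc hk(1)] .
    then have "inv h \<otimes> (inv k \<otimes> h \<otimes> k) \<in> R"
      using subgroup.m_closed[OF R_sub subgroup.m_inv_closed[OF R_sub hk(1)]] by blast
    then show "x \<in> R" using hk kc R_car by (simp add: m_assoc)
  qed
qed

lemma R_pow: "x \<in> R \<Longrightarrow> x [^] (n::nat) \<in> R"
  by (induction n) (auto intro: subgroup.m_closed[OF R_sub] subgroup.one_closed[OF R_sub])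

lemma Pw_R: "Pw \<subseteq> R"
proof (rule generate_subgroup_incl[OF _ R_sub])
  show "{x [^] k_of G |x. x \<in> R} \<subseteq> R" using R_pow by blast
qed

end


context conc begin

lemma Nn: "N \<lhd> F" by (rule N_normal)

lemma N_sub: "subgroup N F" using normal_imp_subgroup[OF Nn] .

lemma N_R: "N \<subseteq> R"
proof
  fix x assume "x \<in> N"
  then obtain c p where cp: "c \<in> C" "p \<in> Pw" "x = c \<otimes> p" unfolding N_def' set_mult_def by blast
  then show "x \<in> R" using C_R Pw_R subgroup.m_closed[OF R_sub] by blast
qed

lemma C_N: "C \<subseteq> N"
proof
  fix c assume c: "c \<in> C"
  have "\<one> \<in> Pw" by (rule generate.one)
  moreover have "c = c \<otimes> \<one>" using c C_R R_car by auto
  ultimately show "c \<in> N" unfolding N_def' set_mult_def using c by blast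
qed

lemma Pw_N: "Pw \<subseteq> N"
proof
  fix p assume p: "p \<in> Pw"
  have "\<one> \<in> C" unfolding comm_sub_def by (rule generate.one)
  moreover have "p = \<one> \<otimes> p" using p Pw_R R_car by auto
  ultimately show "p \<in> N" unfolding N_def' set_mult_def using p by blast
qed

lemma grpH: "group (Gstar F G mu)"
  unfolding Gstar_def using normal.factorgroup_is_group[OF Nn] .

lemma carH: "carrier (Gstar F G mu) = (\<lambda>x. N #> x) ` carrier F"
  unfolding Gstar_def by (rule carrier_FactGroup)

lemma multH: "x \<in> carrier F \<Longrightarrow> y \<in> carrier F \<Longrightarrow> (N #> x) \<otimes>\<^bsub>Gstar F G mu\<^esub> (N #> y) = N #> (x \<otimes> y)"
  unfolding Gstar_def using normal.rcos_sum[OF Nn] by simp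

lemma oneH: "\<one>\<^bsub>Gstar F G mu\<^esub> = N #> \<one>"
  unfolding Gstar_def using coset_mult_one subgroup.subset[OF N_sub] by simp

lemma powH: "x \<in> carrier F \<Longrightarrow> (N #> x) [^]\<^bsub>Gstar F G mu\<^esub> (n::nat) = N #> (x [^] n)"
  unfolding Gstar_def using normal.FactGroup_pow[OF Nn] by simp

lemma cos_eq: assumes "x \<in> carrier F" "y \<in> carrier F" shows "N #> x = N #> y \<longleftrightarrow> x \<otimes> inv y \<in> N"
proof
  assume "N #> x = N #> y"
  then have "x \<in> N #> y" using rcos_self[OF assms(1) N_sub] by simp
  then obtain n where "n \<in> N" "x = n \<otimes> y" unfolding r_coset_def by blast
  then show "x \<otimes> inv y \<in> N" using assms subgroup.subset[OF N_sub] by (auto simp: m_assoc)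
next
  assume a: "x \<otimes> inv y \<in> N"
  have "x = (x \<otimes> inv y) \<otimes> y" using assms by (simp add: m_assoc)
  then have "x \<in> N #> y" unfolding r_coset_def using a by blast
  then show "N #> x = N #> y" using repr_independence[OF _ assms(2) N_sub] by simp
qed

definition prc :: "'f set \<Rightarrow> 'g" where
  "prc X = mu (SOME w. w \<in> X)"

definition tc :: "'g \<Rightarrow> 'f set" where
  "tc g = N #> (SOME w. w \<in> carrier F \<and> mu w = g)"

lemma prc_cos: assumes "x \<in> carrier F" shows "prc (N #> x) = mu x"
proof -
  have ex: "\<exists>w. w \<in> N #> x" using rcos_self[OF assms N_sub] by blast
  define w where "w = (SOME w. w \<in> N #> x)"
  have "w \<in> N #> x" unfolding w_def using someI_ex[OF ex] .
  then obtain n where n: "n \<in> N" "w = n \<otimes> x" unfolding r_coset_def by blast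
  have "mu n = \<one>\<^bsub>G\<^esub>" using n N_R R_mu by blast
  then have "mu w = mu x" using n assms N_R R_car by auto
  then show ?thesis unfolding prc_def w_def by simp
qed

lemma Mset_def': "Mset F G mu = (\<lambda>x. N #> x) ` R"
  unfolding Mset_def by simp

lemma M_ker: "Mset F G mu = kernel (Gstar F G mu) G prc"
proof
  show "Mset F G mu \<subseteq> kernel (Gstar F G mu) G prc"
  proof
    fix X assume "X \<in> Mset F G mu"
    then obtain r where r: "r \<in> R" "X = N #> r" unfolding Mset_def' by blast
    then show "X \<in> kernel (Gstar F G mu) G prc"
      unfolding kernel_def carH using prc_cos R_car R_mu by auto
  qed
  show "kernel (Gstar F G mu) G prc \<subseteq> Mset F G mu"
  proof
    fix X assume "X \<in> kernel (Gstar F G mu) G prc"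
    then obtain x where x: "x \<in> carrier F" "X = N #> x" "prc X = \<one>\<^bsub>G\<^esub>" unfolding kernel_def carH by blast
    then have "x \<in> R" using prc_cos R_iff by simp
    then show "X \<in> Mset F G mu" unfolding Mset_def' using x by blast
  qed
qed

lemma prc_hom: "prc \<in> hom (Gstar F G mu) G"
proof (rule homI)
  fix X assume "X \<in> carrier (Gstar F G mu)"
  then obtain x where "x \<in> carrier F" "X = N #> x" unfolding carH by blast
  then show "prc X \<in> carrier G" using prc_cos by simp
next
  fix X Y assume "X \<in> carrier (Gstar F G mu)" "Y \<in> carrier (Gstar F G mu)"
  then obtain x y where xy: "x \<in> carrier F" "X = N #> x" "y \<in> carrier F" "Y = N #> y" unfolding carH by blast
  then show "prc (X \<otimes>\<^bsub>Gstar F G mu\<^esub> Y) = prc X \<otimes>\<^bsub>G\<^esub> prc Y"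
    using multH prc_cos by simp
qed

lemma prc_ghom: "group_hom (Gstar F G mu) G prc"
  by (rule group_hom.intro[OF grpH grpG]) (simp add: group_hom_axioms_def prc_hom)

lemma Msub: "subgroup (Mset F G mu) (Gstar F G mu)"
  unfolding M_ker using group_hom.subgroup_kernel[OF prc_ghom] .

lemma Mcomm: assumes "X \<in> Mset F G mu" "Y \<in> Mset F G mu"
  shows "X \<otimes>\<^bsub>Gstar F G mu\<^esub> Y = Y \<otimes>\<^bsub>Gstar F G mu\<^esub> X"
proof -
  obtain x y where xy: "x \<in> R" "X = N #> x" "y \<in> R" "Y = N #> y" using assms unfolding Mset_def' by blast
  have c: "x \<in> carrier F" "y \<in> carrier F" using xy R_car by auto
  have "inv (inv x) \<otimes> inv (inv y) \<otimes> inv x \<otimes> inv y \<in> C"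
    unfolding comm_sub_def
    by (rule generate.incl) (use xy R_L subgroup.m_inv_closed[OF R_sub] in blast)
  then have "x \<otimes> y \<otimes> inv x \<otimes> inv y \<in> N" using C_N c by auto
  moreover have "x \<otimes> y \<otimes> inv (y \<otimes> x) = x \<otimes> y \<otimes> inv x \<otimes> inv y" using c by (simp add: m_assoc inv_mult_group)
  ultimately have "N #> (x \<otimes> y) = N #> (y \<otimes> x)" using cos_eq c by simp
  then show ?thesis using xy multH c by simp
qed

lemma Mexp: assumes "X \<in> Mset F G mu" shows "X [^]\<^bsub>Gstar F G mu\<^esub> (k_of G) = \<one>\<^bsub>Gstar F G mu\<^esub>"
proof -
  obtain x where x: "x \<in> R" "X = N #> x" using assms unfolding Mset_def' by blast
  have c: "x \<in> carrier F" using x R_car by auto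
  have "x [^] k_of G \<in> N" using Pw_N generate.incl[of "x [^] k_of G" "{x [^] k_of G | x. x \<in> R}" F] x by blast
  then have "N #> (x [^] k_of G) = N #> \<one>" using cos_eq c by simp
  then show ?thesis using powH c x oneH by simp
qed

lemma tc_car: "g \<in> carrier G \<Longrightarrow> tc g \<in> carrier (Gstar F G mu)"
  and tc_pr: "g \<in> carrier G \<Longrightarrow> prc (tc g) = g"
proof -
  assume g: "g \<in> carrier G"
  have ex: "\<exists>w. w \<in> carrier F \<and> mu w = g" using musurj g by (metis imageE)
  define w where "w = (SOME w. w \<in> carrier F \<and> mu w = g)"
  have w: "w \<in> carrier F" "mu w = g" unfolding w_def using someI_ex[OF ex] by auto
  show "tc g \<in> carrier (Gstar F G mu)" unfolding tc_def w_def[symmetric] carH using w by blast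
  show "prc (tc g) = g" unfolding tc_def w_def[symmetric] using prc_cos w by simp
qed

lemma fitting_sub: "fitting G \<subseteq> carrier G"
  using subgroup.subset[OF normal_imp_subgroup[OF fitting_normal]] .

lemma F_rank_pos: "F_rank G > 0"
proof -
  let ?X = "G\<lparr>carrier := fitting G\<rparr>"
  have fin: "finite (fitting G)" using fitting_sub finG finite_subset by blast
  have sub: "frattini ?X \<subseteq> fitting G" unfolding frattini_def by auto
  have one: "\<one>\<^bsub>G\<^esub> \<in> frattini ?X"
  proof -
    have "\<one>\<^bsub>G\<^esub> \<in> fitting G" using subgroup.one_closed[OF normal_imp_subgroup[OF fitting_normal]] .
    moreover have "\<one>\<^bsub>G\<^esub> \<in> K" if "maximal_subgroup K ?X" for K
      using that subgroup.one_closed[of K ?X] unfolding maximal_subgroup_def by simp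
    ultimately show ?thesis unfolding frattini_def by auto
  qed
  have "card (frattini ?X) > 0" using one sub fin finite_subset card_gt_0_iff by blast
  moreover have "card (frattini ?X) \<le> card (fitting G)" using sub fin card_mono by blast
  ultimately show ?thesis unfolding F_rank_def by (simp add: div_greater_zero_iff)
qed

lemma Pfin: "finite (F_primes G)"
proof -
  have "F_primes G \<subseteq> {d. d dvd F_rank G}" unfolding F_primes_def by blast
  then show ?thesis using finite_divisors_nat[OF F_rank_pos] finite_subset by blast
qed

lemma conc_absext: "absext (Gstar F G mu) G (Mset F G mu) prc tc (F_primes G)"
proof -
  interpret Hg: group "Gstar F G mu" using grpH .
  show ?thesis
  proof (rule absext.intro[OF grpH], unfold absext_axioms_def, intro conjI allI impI)
    show "group G" by (rule grpG)
    show "subgroup (Mset F G mu) (Gstar F G mu)" by (rule Msub)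
    show "prc \<in> hom (Gstar F G mu) G" by (rule prc_hom)
    show "finite (F_primes G)" by (rule Pfin)
    fix m assume "m \<in> Mset F G mu"
    then show "m [^]\<^bsub>Gstar F G mu\<^esub> \<Prod>(F_primes G) = \<one>\<^bsub>Gstar F G mu\<^esub>"
      using Mexp unfolding k_of_def by blast
  qed (auto simp: Mcomm tc_car tc_pr F_primes_def M_ker kernel_def)
qed

end


theorem lemma4p3:
  fixes F :: "'f monoid" and G :: "'g monoid" and f :: "nat \<Rightarrow> 'f" and n :: nat
    and mu :: "'f \<Rightarrow> 'g"
    and eps :: "'g \<Rightarrow> 'g \<Rightarrow> 'f set" and eps_p :: "nat \<Rightarrow> 'g \<Rightarrow> 'g \<Rightarrow> 'f set"
  assumes "group G" and "finite (carrier G)"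
    and "fitting G \<noteq> {\<one>\<^bsub>G\<^esub>}"
    and "free_on F f n"
    and "mu \<in> hom F G" and "mu ` carrier F = carrier G"
    and "defines_extension F G mu eps"
    and "\<forall>p \<in> F_primes G. \<forall>g \<in> carrier G. \<forall>h \<in> carrier G. eps_p p g h \<in> Msyl F G mu p"
    and "\<forall>g \<in> carrier G. \<forall>h \<in> carrier G.
           eps g h = finprod (Mgrp F G mu) (\<lambda>p. eps_p p g h) (F_primes G)"
  shows "etaM_W F G mu =
           {a \<in> Aut (Mgrp F G mu). \<forall>p \<in> F_primes G. \<exists>b \<in> Wp F G mu p.
              \<forall>m \<in> Msyl F G mu p. a m = b m}
       \<and> (\<forall>p \<in> F_primes G.
           (\<lambda>b. restrict b (Msyl F G mu p)) ` Wp F G mu p =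
           {c \<in> Cp F G mu p. cohomologous F G mu p (\<lambda>g h. c (eps_p p g h)) (eps_p p)})"
proof -
  have grpF: "group F" using assms(4) unfolding free_on_def by blast
  interpret cc: conc F G mu
    using grpF assms(1,2,5,6) by (simp add: conc_def conc_axioms_def)
  obtain s where s1: "\<forall>g \<in> carrier G. \<exists>w \<in> carrier F. mu w = g \<and> s g = Nsub F G mu #>\<^bsub>F\<^esub> w"
    and s2: "\<forall>g \<in> carrier G. \<forall>h \<in> carrier G.
          eps g h = s g \<otimes>\<^bsub>Gstar F G mu\<^esub> s h \<otimes>\<^bsub>Gstar F G mu\<^esub> inv\<^bsub>Gstar F G mu\<^esub> (s (g \<otimes>\<^bsub>G\<^esub> h))"
    using assms(7) unfolding defines_extension_def by blast
  interpret A0: absext "Gstar F G mu" G "Mset F G mu" cc.prc cc.tc "F_primes G"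
    by (rule cc.conc_absext)
  have SylEq: "A0.Syl p = Msyl F G mu p" for p
    unfolding A0.Syl_def Msyl_def by simp
  interpret A: absext_eps "Gstar F G mu" G "Mset F G mu" cc.prc cc.tc "F_primes G" s eps eps_p
  proof (rule absext_eps.intro[OF cc.conc_absext], unfold absext_eps_axioms_def, intro conjI allI impI)
    fix g assume g: "g \<in> carrier G"
    then obtain w where w: "w \<in> carrier F" "mu w = g" "s g = Nsub F G mu #>\<^bsub>F\<^esub> w" using s1 by blast
    show "s g \<in> carrier (Gstar F G mu)" using w cc.carH by simp
    show "cc.prc (s g) = g" using w cc.prc_cos by simp
  next
    fix g h assume "g \<in> carrier G" "h \<in> carrier G"
    then show "eps g h = s g \<otimes>\<^bsub>Gstar F G mu\<^esub> s h \<otimes>\<^bsub>Gstar F G mu\<^esub> inv\<^bsub>Gstar F G mu\<^esub> (s (g \<otimes>\<^bsub>G\<^esub> h))"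
      using s2 by blast
  next
    fix p g h assume "p \<in> F_primes G" "g \<in> carrier G" "h \<in> carrier G"
    then show "eps_p p g h \<in> A0.Syl p" using assms(8) SylEq by simp
  next
    fix g h assume "g \<in> carrier G" "h \<in> carrier G"
    then show "eps g h = finprod (Gstar F G mu\<lparr>carrier := Mset F G mu\<rparr>) (\<lambda>p. eps_p p g h) (F_primes G)"
      using assms(9) unfolding Mgrp_def by blast
  qed
  have e1: "A.eW = etaM_W F G mu"
    unfolding A.eW_def A0.W_def etaM_W_def Wker_def AutM_Gstar_def by blast
  have e3: "A0.Syl p = Msyl F G mu p" for p using SylEq .
  have e2: "A.Wq p = Wp F G mu p" for p
    unfolding A.Wq_def Wp_def e1 e3 by blast
  have eact: "A0.act g m = gact F G mu g m" for g m
    unfolding A0.act_def gact_def cc.tc_def Let_def by simp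
  have e5: "A.Stab p = {c \<in> Cp F G mu p. cohomologous F G mu p (\<lambda>g h. c (eps_p p g h)) (eps_p p)}" for p
    unfolding A.Stab_def A.Cq_def Cp_def A.coh_def cohomologous_def eact e3 by blast
  have e4: "Mgrp F G mu = Gstar F G mu\<lparr>carrier := Mset F G mu\<rparr>" unfolding Mgrp_def ..
  show ?thesis using A.abstract_main unfolding e1 e2 e3 e4 e5 by simp
qed

end
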